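(* In the standing setup, the density of $\tilde S_n=Z_1+\cdots+Z_n$ is $$f_{\tilde S_n}(x)=\sum_{l=n}^{\infty}A_l\,e^{-mx}\,x^{l-1}\frac{m^{l}}{\Gamma(l)},\qquad x>0,$$ where $A_l=\Pr(K=l)$; moreover $A_l=0$ for $l<n$ and $$A_l=\sum_{\nu_1=0}^{m-1}\cdots\sum_{\nu_n=0}^{m-1}\gamma\Big(\tfrac{\nu_1}{m},\dots,\tfrac{\nu_n}{m}\Big)\Pr\Big(\sum_{i=1}^n\sum_{j=\nu_i+1}^m\Delta_{i,j}=l\Big).$$
   Context: Standing setup. Let $n\ge2$ and $m\ge1$ be integers. Let $\alpha:\{0,\tfrac1m,\dots,1\}^n\to\mathbb R$ be such that $C_B(u_1,\dots,u_n)=\sum_{\nu_1=0}^{m}\cdots\sum_{\nu_n=0}^{m}\alpha(\tfrac{\nu_1}{m},\dots,\tfrac{\nu_n}{m})\prod_{i=1}^n G_{\nu_i:m}(u_i)$, with $G_{\nu:m}(u)=\binom{m}{\nu}u^\nu(1-u)^{m-\nu}$, is a copula on $[0,1]^n$ (Bernstein copula). For $\nu_i\in\{0,\dots,m-1\}$ put $\gamma(\tfrac{\nu_1}{m},\dots,\tfrac{\nu_n}{m})=\sum_{l_1=0}^1\cdots\sum_{l_n=0}^1(-1)^{n+l_1+\cdots+l_n}\alpha(\tfrac{\nu_1+l_1}{m},\dots,\tfrac{\nu_n+l_n}{m})$; these numbers are nonnegative, sum to $1$, and $C_B$ has density $c_B(u)=\sum_{\nu_1=0}^{m-1}\cdots\sum_{\nu_n=0}^{m-1}\gamma(\tfrac{\nu_1}{m},\dots,\tfrac{\nu_n}{m})\prod_{i=1}^n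 mG_{\nu_i:m-1}(u_i)$. Let $(Z_1,\dots,Z_n)$ have standard exponential (mean 1) marginals and joint survival function $\Pr(Z_1>z_1,\dots,Z_n>z_n)=C_B(e^{-z_1},\dots,e^{-z_n})$. Let $\Theta$ be a positive random variable independent of $(Z_1,\dots,Z_n)$ with density $f_\Theta$ and Laplace transform $f_\Theta^\star(s)=\int_0^\infty e^{-s\theta}f_\Theta(\theta)d\theta$; $f_\Theta^{\star(k)}$ denotes its $k$-th derivative. Put $X_i=Z_i/\Theta$, $S_n=X_1+\cdots+X_n$, $\tilde S_n=Z_1+\cdots+Z_n$. Let $(N_1,\dots,N_n)$ be a random vector with $\Pr(N_1=\nu_1,\dots,N_n=\nu_n)=\gamma(\tfrac{\nu_1}{m},\dots,\tfrac{\nu_n}{m})$, $\nu_i\in\{0,\dots,m-1\}$, and let $\{\Delta_{i,j}:1\le i\le n,1\le j\le m\}$ be mutually independent random variables, independent of $(N_1,\dots,N_n)$, with shifted geometric law $\Pr(\Delta_{i,j}=l)=\tfrac jm(1-\tfrac jm)^{l-1}$, $l=1,2,\dots$ (with $0^0=1$, so $\Delta_{i,m}=1$). Put $K_i=\sum_{j=N_i+1}^m\Delta_{i,j}$, $K=\sum_{i=1}^nK_i$ and $A_l=\Pr(K=l)$. *)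

theory Defs
  imports "HOL-Probability.Probability"
begin

text \<open>Index vectors (nu_1,...,nu_n) are functions nat => nat restricted to {..<n}
  (PiE, undefined outside). alpha(nu_1/m,...,nu_n/m) is written alpha nu.\<close>

definition bern_G :: "nat \<Rightarrow> nat \<Rightarrow> real \<Rightarrow> real" where
  "bern_G m \<nu> u = real (m choose \<nu>) * u ^ \<nu> * (1 - u) ^ (m - \<nu>)"

definition alpha_grid :: "nat \<Rightarrow> nat \<Rightarrow> (nat \<Rightarrow> nat) set" where
  "alpha_grid n m = PiE {..<n} (\<lambda>_. {..m})"

definition gamma_grid :: "nat \<Rightarrow> nat \<Rightarrow> (nat \<Rightarrow> nat) set" where
  "gamma_grid n m = PiE {..<n} (\<lambda>_. {..<m})"

definition bernstein_copula ::
  "nat \<Rightarrow> nat \<Rightarrow> ((nat \<Rightarrow> nat) \<Rightarrow> real) \<Rightarrow> (nat \<Rightarrow> real) \<Rightarrow> real" where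
  "bernstein_copula n m \<alpha> u =
     (\<Sum>\<nu>\<in>alpha_grid n m. \<alpha> \<nu> * (\<Prod>i<n. bern_G m (\<nu> i) (u i)))"

text \<open>gamma(nu) = sum over l in {0,1}^n of (-1)^(n + l_1+...+l_n) alpha(nu + l);
  l is encoded by the set S = {i. l_i = 1}.\<close>
definition bern_gamma :: "nat \<Rightarrow> ((nat \<Rightarrow> nat) \<Rightarrow> real) \<Rightarrow> (nat \<Rightarrow> nat) \<Rightarrow> real" where
  "bern_gamma n \<alpha> \<nu> =
     (\<Sum>S\<in>Pow {..<n}. (-1) ^ (n + card S) *
        \<alpha> (\<lambda>i. if i < n then \<nu> i + (if i \<in> S then 1 else 0) else undefined))"

definition unit_cube :: "nat \<Rightarrow> (nat \<Rightarrow> real) set" where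
  "unit_cube n = {u. \<forall>i<n. 0 \<le> u i \<and> u i \<le> 1}"

definition is_copula :: "nat \<Rightarrow> ((nat \<Rightarrow> real) \<Rightarrow> real) \<Rightarrow> bool" where
  "is_copula n C \<longleftrightarrow>
     (\<forall>u\<in>unit_cube n. (\<exists>i<n. u i = 0) \<longrightarrow> C u = 0) \<and>
     (\<forall>u\<in>unit_cube n. \<forall>i<n. (\<forall>j<n. j \<noteq> i \<longrightarrow> u j = 1) \<longrightarrow> C u = u i) \<and>
     (\<forall>a\<in>unit_cube n. \<forall>b\<in>unit_cube n. (\<forall>i<n. a i \<le> b i) \<longrightarrow>
        0 \<le> (\<Sum>S\<in>Pow {..<n}. (-1) ^ card S * C (\<lambda>i. if i \<in> S then a i else b i)))"

definition shifted_geometric_pmf :: "real \<Rightarrow> nat pmf" where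
  "shifted_geometric_pmf p = map_pmf Suc (geometric_pmf p)"

text \<open>Joint law of the mutually independent family Delta_{i,j}, 1<=i<=n (here 0<=i<n), 1<=j<=m.\<close>
definition Delta_pmf :: "nat \<Rightarrow> nat \<Rightarrow> (nat \<times> nat \<Rightarrow> nat) pmf" where
  "Delta_pmf n m = Pi_pmf ({..<n} \<times> {1..m}) 0
      (\<lambda>(i, j). shifted_geometric_pmf (real j / real m))"

definition K_of :: "nat \<Rightarrow> nat \<Rightarrow> (nat \<Rightarrow> nat) \<Rightarrow> (nat \<times> nat \<Rightarrow> nat) \<Rightarrow> nat" where
  "K_of n m \<nu> d = (\<Sum>i<n. \<Sum>j\<in>{\<nu> i + 1..m}. d (i, j))"

definition K_pmf :: "nat \<Rightarrow> nat \<Rightarrow> (nat \<Rightarrow> nat) pmf \<Rightarrow> nat pmf" where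
  "K_pmf n m Npmf = do { \<nu> \<leftarrow> Npmf; d \<leftarrow> Delta_pmf n m; return_pmf (K_of n m \<nu> d) }"

end

theory Submission
  imports Defs
begin


definition erl :: "real \<Rightarrow> nat \<Rightarrow> real \<Rightarrow> real" where
  "erl c l x = (if l = 0 then 0 else erlang_density (l - 1) c x)"

definition mixd :: "real \<Rightarrow> nat pmf \<Rightarrow> real \<Rightarrow> ennreal" where
  "mixd c p x = (\<integral>\<^sup>+ l. ennreal (erl c l x) \<partial>measure_pmf p)"

definition addp :: "nat pmf \<Rightarrow> nat pmf \<Rightarrow> nat pmf" where
  "addp p q = map_pmf (\<lambda>(a,b). a + b) (pair_pmf p q)"

lemma erl_nonneg: "0 \<le> c \<Longrightarrow> 0 \<le> erl c l x"
  by (simp add: erl_def)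

lemma borel_erl[measurable]: "erl c l \<in> borel_measurable borel"
  unfolding erl_def by (cases "l = 0") auto

lemma mixd_suminf: "mixd c p x = (\<Sum>l. ennreal (pmf p l) * ennreal (erl c l x))"
  unfolding mixd_def nn_integral_measure_pmf nn_integral_count_space_nat ..

lemma borel_mixd[measurable]: "mixd c p \<in> borel_measurable borel"
  unfolding mixd_suminf[abs_def] by measurable

lemma conv_erl:
  assumes "0 < c" "0 < a" "0 < b"
  shows "(\<integral>\<^sup>+y. ennreal (erl c a (x - y)) * ennreal (erl c b y) \<partial>lborel) = ennreal (erl c (a + b) x)"
proof -
  have "(\<integral>\<^sup>+y. ennreal (erl c a (x - y)) * ennreal (erl c b y) \<partial>lborel)
     = (\<integral>\<^sup>+y. ennreal (erlang_density (a - 1) c (x - y)) * ennreal (erlang_density (b - 1) c y) \<partial>lborel)"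
    using assms by (simp add: erl_def)
  also have "\<dots> = ennreal (erlang_density (Suc (a - 1) + Suc (b - 1) - 1) c x)"
    using convolution_erlang_density[OF assms(1), of "a - 1" "b - 1"] by (simp add: fun_eq_iff)
  also have "Suc (a - 1) + Suc (b - 1) - 1 = a + b - 1" using assms by simp
  finally show ?thesis using assms by (simp add: erl_def)
qed

lemma conv_mixd:
  assumes c: "0 < c" and p0: "pmf p 0 = 0" and q0: "pmf q 0 = 0"
  shows "(\<integral>\<^sup>+y. mixd c p (x - y) * mixd c q y \<partial>lborel) = mixd c (addp p q) x"
proof -
  have "(\<integral>\<^sup>+y. mixd c p (x - y) * mixd c q y \<partial>lborel)
      = (\<integral>\<^sup>+y. (\<Sum>a. (\<Sum>b. ennreal (pmf p a) * ennreal (pmf q b) *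
            (ennreal (erl c a (x - y)) * ennreal (erl c b y)))) \<partial>lborel)"
  proof (intro nn_integral_cong)
    fix y
    have "mixd c p (x - y) * mixd c q y = (\<Sum>a. ennreal (pmf p a) * ennreal (erl c a (x - y)) * mixd c q y)"
      unfolding mixd_suminf[of c p] by (rule ennreal_suminf_multc[symmetric])
    also have "\<dots> = (\<Sum>a. (\<Sum>b. ennreal (pmf p a) * ennreal (erl c a (x - y)) * (ennreal (pmf q b) * ennreal (erl c b y))))"
      unfolding mixd_suminf[of c q] ennreal_suminf_cmult[symmetric] ..
    finally show "mixd c p (x - y) * mixd c q y = (\<Sum>a. (\<Sum>b. ennreal (pmf p a) * ennreal (pmf q b) *
            (ennreal (erl c a (x - y)) * ennreal (erl c b y))))"
      by (simp only: mult_ac)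
  qed
  also have "\<dots> = (\<Sum>a. (\<Sum>b. (\<integral>\<^sup>+y. ennreal (pmf p a) * ennreal (pmf q b) *
            (ennreal (erl c a (x - y)) * ennreal (erl c b y)) \<partial>lborel)))"
    by (subst nn_integral_suminf; (subst nn_integral_suminf)?) auto
  also have "\<dots> = (\<Sum>a. (\<Sum>b. ennreal (pmf p a) * (ennreal (pmf q b) * ennreal (erl c (a + b) x))))"
  proof (intro suminf_cong)
    fix a b
    show "(\<integral>\<^sup>+y. ennreal (pmf p a) * ennreal (pmf q b) *
            (ennreal (erl c a (x - y)) * ennreal (erl c b y)) \<partial>lborel)
       = ennreal (pmf p a) * (ennreal (pmf q b) * ennreal (erl c (a + b) x))"
    proof (cases "a = 0 \<or> b = 0")
      case True then show ?thesis using p0 q0 by auto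
    next
      case False
      then show ?thesis using c
        by (subst nn_integral_cmult) (auto simp: conv_erl mult.assoc)
    qed
  qed
  also have "\<dots> = (\<Sum>a. ennreal (pmf p a) * (\<Sum>b. ennreal (pmf q b) * ennreal (erl c (a + b) x)))"
    by (simp only: ennreal_suminf_cmult)
  also have "\<dots> = (\<integral>\<^sup>+a. \<integral>\<^sup>+b. ennreal (erl c (a + b) x) \<partial>q \<partial>p)"
    by (simp only: nn_integral_measure_pmf nn_integral_count_space_nat)
  also have "\<dots> = mixd c (addp p q) x"
    unfolding mixd_def addp_def nn_integral_map_pmf nn_integral_pair_pmf' by simp
  finally show ?thesis .
qed



lemma nn_FTC_Icc:
  fixes f F :: "real \<Rightarrow> real"
  assumes "a \<le> b"
    and deriv: "\<And>x. a \<le> x \<Longrightarrow> x \<le> b \<Longrightarrow> DERIV F x :> f x"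
    and cont: "\<And>x. a \<le> x \<Longrightarrow> x \<le> b \<Longrightarrow> isCont f x"
    and nn: "\<And>x. a \<le> x \<Longrightarrow> x \<le> b \<Longrightarrow> 0 \<le> f x"
  shows "(\<integral>\<^sup>+x. ennreal (f x * indicator {a..b} x) \<partial>lborel) = ennreal (F b - F a)"
proof -
  have h: "has_bochner_integral lborel (\<lambda>x. f x * indicator {a .. b} x) (F b - F a)"
    by (rule has_bochner_integral_FTC_Icc_real[OF assms(1) deriv cont])
  have "(\<integral>\<^sup>+x. ennreal (f x * indicator {a..b} x) \<partial>lborel) = ennreal (\<integral>x. f x * indicator {a..b} x \<partial>lborel)"
    using h nn by (intro nn_integral_eq_integral) (auto simp: has_bochner_integral_iff indicator_def)
  also have "(\<integral>x. f x * indicator {a..b} x \<partial>lborel) = F b - F a"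
    using h by (simp add: has_bochner_integral_iff)
  finally show ?thesis .
qed

lemma pmf_sg:
  assumes "0 < p" "p \<le> 1"
  shows "pmf (shifted_geometric_pmf p) l = (if l = 0 then 0 else (1 - p) ^ (l - 1) * p)"
proof (cases l)
  case 0 then show ?thesis
    by (simp add: shifted_geometric_pmf_def pmf_eq_0_set_pmf)
next
  case (Suc k)
  then show ?thesis using assms
    by (simp add: shifted_geometric_pmf_def pmf_map_inj')
qed

lemma exp_mix:
  assumes j: "1 \<le> j" "j \<le> m"
  shows "mixd (real m) (shifted_geometric_pmf (real j / real m)) x = ennreal (exponential_density (real j) x)"
proof -
  let ?p = "real j / real m"
  have p: "0 < ?p" "?p \<le> 1" using j by auto
  have "mixd (real m) (shifted_geometric_pmf ?p) x
      = (\<integral>\<^sup>+ k. ennreal (erl (real m) (Suc k) x) \<partial>measure_pmf (geometric_pmf ?p))"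
    unfolding mixd_def shifted_geometric_pmf_def by simp
  also have "\<dots> = (\<Sum>k. ennreal ((1 - ?p) ^ k * ?p) * ennreal (erlang_density k (real m) x))"
    unfolding nn_integral_measure_pmf nn_integral_count_space_nat using p by (simp add: erl_def)
  also have "\<dots> = ennreal (exponential_density (real j) x)"
  proof (cases "x < 0")
    case True then show ?thesis by (simp add: erlang_density_def)
  next
    case False
    have eq: "(1 - ?p) ^ k * ?p * erlang_density k (real m) x
        = (real j * exp (- real m * x)) * ((real m - real j) ^ k * x ^ k /\<^sub>R fact k)" for k
    proof -
      have "(1 - ?p) ^ k * real m ^ k = (real m - real j) ^ k"
        using j by (simp add: power_mult_distrib[symmetric] field_simps)
      then show ?thesis using False j
        by (simp add: erlang_density_def power_mult_distrib field_simps)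
    qed
    have s: "(\<lambda>k. (1 - ?p) ^ k * ?p * erlang_density k (real m) x) sums
        ((real j * exp (- real m * x)) * exp ((real m - real j) * x))"
      unfolding eq power_mult_distrib[symmetric] by (intro sums_mult exp_converges)
    have "(real j * exp (- real m * x)) * exp ((real m - real j) * x) = exponential_density (real j) x"
      using False by (simp add: exponential_density_def mult.assoc exp_add[symmetric] algebra_simps)
    with s have s2: "(\<lambda>k. (1 - ?p) ^ k * ?p * erlang_density k (real m) x) sums exponential_density (real j) x"
      by simp
    have "(\<Sum>k. ennreal ((1 - ?p) ^ k * ?p) * ennreal (erlang_density k (real m) x))
        = (\<Sum>k. ennreal ((1 - ?p) ^ k * ?p * erlang_density k (real m) x))"
      using p by (intro suminf_cong) (simp add: ennreal_mult[symmetric])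
    also have "\<dots> = ennreal (exponential_density (real j) x)"
      using p by (intro suminf_ennreal_eq[OF _ s2]) simp
    finally show ?thesis .
  qed
  finally show ?thesis .
qed

definition fden :: "nat \<Rightarrow> nat \<Rightarrow> real \<Rightarrow> real" where
  "fden m \<nu> z = (if z < 0 then 0 else real m * real ((m - 1) choose \<nu>) * exp (- (real \<nu> + 1) * z) * (1 - exp (- z)) ^ (m - 1 - \<nu>))"

lemma fden_nonneg: "0 \<le> fden m \<nu> z"
  unfolding fden_def by auto

lemma borel_fden[measurable]: "fden m \<nu> \<in> borel_measurable borel"
  unfolding fden_def by measurable

lemma conv_fden:
  assumes \<nu>: "1 \<le> \<nu>" "\<nu> < m"
  shows "(\<integral>\<^sup>+y. ennreal (exponential_density (real \<nu>) (x - y)) * ennreal (fden m \<nu> y) \<partial>lborel)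
       = ennreal (fden m (\<nu> - 1) x)"
proof (cases "x < 0")
  case True
  have "(\<integral>\<^sup>+y. ennreal (exponential_density (real \<nu>) (x - y)) * ennreal (fden m \<nu> y) \<partial>lborel)
      = (\<integral>\<^sup>+(y::real). 0 \<partial>lborel)"
    using True by (intro nn_integral_cong) (auto simp: fden_def exponential_density_def)
  then show ?thesis using True by (simp add: fden_def)
next
  case False
  define r where "r = m - 1 - \<nu>"
  define c where "c = real m * real ((m - 1) choose \<nu>)"
  define K where "K = real \<nu> * c * exp (- real \<nu> * x)"
  have K: "0 \<le> K" unfolding K_def c_def by auto
  have "(\<integral>\<^sup>+y. ennreal (exponential_density (real \<nu>) (x - y)) * ennreal (fden m \<nu> y) \<partial>lborel)
      = (\<integral>\<^sup>+y. ennreal (K * (exp (- y) * (1 - exp (- y)) ^ r) * indicator {0..x} y) \<partial>lborel)"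
  proof (intro nn_integral_cong)
    fix y :: real
    show "ennreal (exponential_density (real \<nu>) (x - y)) * ennreal (fden m \<nu> y)
        = ennreal (K * (exp (- y) * (1 - exp (- y)) ^ r) * indicator {0..x} y)"
    proof (cases "0 \<le> y \<and> y \<le> x")
      case True
      have e: "exp (- (x - y) * real \<nu>) * exp (- (real \<nu> + 1) * y) = exp (- real \<nu> * x) * exp (- y)"
        by (simp add: exp_add[symmetric] algebra_simps)
      have "exponential_density (real \<nu>) (x - y) * fden m \<nu> y
          = real \<nu> * c * (exp (- (x - y) * real \<nu>) * exp (- (real \<nu> + 1) * y)) * (1 - exp (- y)) ^ r"
        using True by (simp add: exponential_density_def fden_def c_def r_def)
      also have "\<dots> = K * (exp (- y) * (1 - exp (- y)) ^ r)"
        unfolding e K_def by simp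
      finally have eq1: "exponential_density (real \<nu>) (x - y) * fden m \<nu> y = K * (exp (- y) * (1 - exp (- y)) ^ r)" .
      have "ennreal (exponential_density (real \<nu>) (x - y)) * ennreal (fden m \<nu> y)
          = ennreal (exponential_density (real \<nu>) (x - y) * fden m \<nu> y)"
        using \<nu> by (intro ennreal_mult[symmetric]) (auto simp: exponential_density_nonneg fden_nonneg)
      then show ?thesis using True eq1 by simp
    next
      case False
      then show ?thesis
        by (auto simp: fden_def exponential_density_def)
    qed
  qed
  also have "\<dots> = ennreal (K * (1 - exp (- x)) ^ (Suc r) / real (Suc r) - K * (1 - exp (- 0)) ^ (Suc r) / real (Suc r))"
  proof (rule nn_FTC_Icc)
    show "0 \<le> x" using False by simp
    fix y :: real
    show "DERIV (\<lambda>y. K * (1 - exp (- y)) ^ Suc r / real (Suc r)) y :> K * (exp (- y) * (1 - exp (- y)) ^ r)"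
    proof -
      have d1: "DERIV (\<lambda>y. 1 - exp (- y)) y :> exp (- y)"
        by (auto intro!: derivative_eq_intros)
      have "DERIV (\<lambda>y. K * (1 - exp (- y)) ^ Suc r / real (Suc r)) y :>
          K * (of_nat (Suc r) * (exp (- y) * (1 - exp (- y)) ^ (Suc r - Suc 0))) / real (Suc r)"
        by (intro DERIV_cdivide DERIV_cmult DERIV_power d1)
      then show ?thesis
        by (rule DERIV_cong) (simp del: of_nat_Suc)
    qed
    show "isCont (\<lambda>y. K * (exp (- y) * (1 - exp (- y)) ^ r)) y"
      by (intro continuous_intros)
    assume "0 \<le> y" "y \<le> x"
    then show "0 \<le> K * (exp (- y) * (1 - exp (- y)) ^ r)"
      using K by auto
  qed
  also have "K * (1 - exp (- x)) ^ (Suc r) / real (Suc r) - K * (1 - exp (- 0)) ^ (Suc r) / real (Suc r)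
      = fden m (\<nu> - 1) x"
  proof -
    have b1: "\<nu> * ((m - 1) choose \<nu>) = (m - 1) * ((m - 2) choose (\<nu> - 1))"
      using times_binomial_minus1_eq[of \<nu> "m - 1"] \<nu> by (simp add: numeral_2_eq_2 diff_Suc)
    have b2: "(m - 1 - (\<nu> - 1)) * ((m - 1) choose (\<nu> - 1)) = (m - 1) * ((m - 2) choose (\<nu> - 1))"
      using binomial_absorb_comp[of "m - 1" "\<nu> - 1"] by (simp add: numeral_2_eq_2 diff_Suc)
    have sr: "Suc r = m - 1 - (\<nu> - 1)" using \<nu> unfolding r_def by simp
    have bb: "real \<nu> * real ((m - 1) choose \<nu>) = real (Suc r) * real ((m - 1) choose (\<nu> - 1))"
      using b1 b2 sr by (metis of_nat_mult)
    have "K * (1 - exp (- x)) ^ (Suc r) / real (Suc r) =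
        real m * (real \<nu> * real ((m - 1) choose \<nu>)) * exp (- real \<nu> * x) * (1 - exp (- x)) ^ (Suc r) / real (Suc r)"
      unfolding K_def c_def by (simp add: ac_simps)
    also have "\<dots> = real m * real ((m - 1) choose (\<nu> - 1)) * exp (- real \<nu> * x) * (1 - exp (- x)) ^ (Suc r)"
      unfolding bb by (simp del: of_nat_Suc)
    also have "\<dots> = fden m (\<nu> - 1) x"
      using False \<nu> sr by (simp add: fden_def)
    finally show ?thesis by simp
  qed
  finally show ?thesis .
qed



definition psum :: "'i set \<Rightarrow> ('i \<Rightarrow> nat pmf) \<Rightarrow> nat pmf" where
  "psum J P = map_pmf (\<lambda>d. \<Sum>x\<in>J. d x) (Pi_pmf J 0 P)"

lemma psum_union:
  assumes "finite A" "finite B" "A \<inter> B = {}"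
  shows "psum (A \<union> B) P = addp (psum A P) (psum B P)"
proof -
  have "psum (A \<union> B) P = map_pmf (\<lambda>d. \<Sum>x\<in>A \<union> B. d x)
      (map_pmf (\<lambda>(f,g) x. if x \<in> A then f x else g x) (pair_pmf (Pi_pmf A 0 P) (Pi_pmf B 0 P)))"
    unfolding psum_def using assms by (subst Pi_pmf_union) auto
  also have "\<dots> = map_pmf (\<lambda>(f,g). (\<Sum>x\<in>A. f x) + (\<Sum>x\<in>B. g x)) (pair_pmf (Pi_pmf A 0 P) (Pi_pmf B 0 P))"
    unfolding map_pmf_comp
  proof (intro map_pmf_cong refl)
    fix z assume "z \<in> set_pmf (pair_pmf (Pi_pmf A 0 P) (Pi_pmf B 0 P))"
    obtain f g where z: "z = (f, g)" by (cases z)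
    have "(\<Sum>x\<in>A \<union> B. if x \<in> A then f x else g x) = (\<Sum>x\<in>A. if x \<in> A then f x else g x) + (\<Sum>x\<in>B. if x \<in> A then f x else g x)"
      using assms by (intro sum.union_disjoint) auto
    also have "\<dots> = (\<Sum>x\<in>A. f x) + (\<Sum>x\<in>B. g x)"
      using assms by (auto intro!: sum.cong)
    finally show "(\<Sum>x\<in>A \<union> B. ((\<lambda>(f,g) x. if x \<in> A then f x else g x) z) x) = (\<lambda>(f,g). (\<Sum>x\<in>A. f x) + (\<Sum>x\<in>B. g x)) z"
      unfolding z by simp
  qed
  also have "\<dots> = addp (psum A P) (psum B P)"
    unfolding addp_def psum_def map_pair[symmetric] map_pmf_comp by (simp add: case_prod_beta')
  finally show ?thesis .
qed

lemma psum_singleton: "psum {x} P = P x"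
  unfolding psum_def Pi_pmf_singleton map_pmf_comp by simp

lemma psum_subset:
  assumes "finite D" "J \<subseteq> D"
  shows "map_pmf (\<lambda>d. \<Sum>x\<in>J. d x) (Pi_pmf D 0 P) = psum J P"
  unfolding psum_def using assms
  by (subst Pi_pmf_subset[OF assms]) (auto simp: map_pmf_comp intro!: map_pmf_cong sum.cong)

lemma addp_pmf0:
  assumes "pmf p 0 = 0"
  shows "pmf (addp p q) 0 = 0"
proof -
  have "0 \<notin> set_pmf p" using assms by (simp add: set_pmf_eq)
  then have "0 \<notin> set_pmf (addp p q)" unfolding addp_def by auto
  then show ?thesis by (simp add: set_pmf_eq)
qed

lemma sg_pmf0: "pmf (shifted_geometric_pmf p) 0 = 0"
  unfolding shifted_geometric_pmf_def by (simp add: pmf_eq_0_set_pmf)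

definition sgm :: "nat \<Rightarrow> nat \<Rightarrow> nat pmf" where
  "sgm m j = shifted_geometric_pmf (real j / real m)"

lemma psum_pmf0:
  assumes "finite J" "J \<noteq> {}"
  shows "pmf (psum J (\<lambda>j. sgm m (f j))) 0 = 0"
  using assms
proof (induction J rule: finite_ne_induct)
  case (singleton x) then show ?case by (simp add: psum_singleton sgm_def sg_pmf0)
next
  case (insert x F)
  have "psum (insert x F) (\<lambda>j. sgm m (f j)) = addp (psum {x} (\<lambda>j. sgm m (f j))) (psum F (\<lambda>j. sgm m (f j)))"
    using insert by (subst psum_union[symmetric]) auto
  then show ?case by (simp add: addp_pmf0 psum_singleton sgm_def sg_pmf0)
qed

definition T :: "nat \<Rightarrow> nat \<Rightarrow> real \<Rightarrow> real" where
  "T m \<nu> u = (\<Sum>k\<in>{Suc \<nu>..m}. bern_G m k u)"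

lemma dG:
  assumes "Suc \<nu> \<le> m"
  shows "DERIV (bern_G m (Suc \<nu>)) u :>
    real m * real ((m - 1) choose \<nu>) * u ^ \<nu> * (1 - u) ^ (m - 1 - \<nu>)
    - real m * real ((m - 1) choose Suc \<nu>) * u ^ Suc \<nu> * (1 - u) ^ (m - 1 - Suc \<nu>)"
proof -
  have e1: "real (Suc \<nu>) * real (m choose Suc \<nu>) = real m * real ((m - 1) choose \<nu>)"
    using times_binomial_minus1_eq[of "Suc \<nu>" m] by (metis diff_Suc_1 of_nat_mult zero_less_Suc)
  have e2: "real (m - Suc \<nu>) * real (m choose Suc \<nu>) = real m * real ((m - 1) choose Suc \<nu>)"
    using binomial_absorb_comp[of m "Suc \<nu>"] by (metis of_nat_mult)
  let ?C = "real (m choose Suc \<nu>)"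
  have d: "DERIV (\<lambda>u. ?C * u ^ Suc \<nu> * (1 - u) ^ (m - Suc \<nu>)) u :>
      (?C * u ^ Suc \<nu>) * (of_nat (m - Suc \<nu>) * ((0 - 1) * (1 - u) ^ (m - Suc \<nu> - Suc 0)))
      + (?C * (of_nat (Suc \<nu>) * (1 * u ^ (Suc \<nu> - Suc 0)))) * (1 - u) ^ (m - Suc \<nu>)"
    by (rule DERIV_mult'[OF DERIV_cmult[OF DERIV_power[OF DERIV_ident]] DERIV_power[OF DERIV_diff[OF DERIV_const DERIV_ident]]])
  have m1: "m - Suc \<nu> = m - 1 - \<nu>" "m - Suc \<nu> - Suc 0 = m - 1 - Suc \<nu>" by auto
  define X1 where "X1 = u ^ \<nu> * (1 - u) ^ (m - 1 - \<nu>)"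
  define X2 where "X2 = u ^ Suc \<nu> * (1 - u) ^ (m - 1 - Suc \<nu>)"
  have "(?C * u ^ Suc \<nu>) * (of_nat (m - Suc \<nu>) * ((0 - 1) * (1 - u) ^ (m - Suc \<nu> - Suc 0)))
      + (?C * (of_nat (Suc \<nu>) * (1 * u ^ (Suc \<nu> - Suc 0)))) * (1 - u) ^ (m - Suc \<nu>)
      = (real (Suc \<nu>) * ?C) * X1 - (real (m - Suc \<nu>) * ?C) * X2"
    unfolding X1_def X2_def m1 by (simp add: algebra_simps)
  also have "\<dots> = real m * real ((m - 1) choose \<nu>) * X1 - real m * real ((m - 1) choose Suc \<nu>) * X2"
    unfolding e1 e2 ..
  finally have eq: "(?C * u ^ Suc \<nu>) * (of_nat (m - Suc \<nu>) * ((0 - 1) * (1 - u) ^ (m - Suc \<nu> - Suc 0)))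
      + (?C * (of_nat (Suc \<nu>) * (1 * u ^ (Suc \<nu> - Suc 0)))) * (1 - u) ^ (m - Suc \<nu>)
      = real m * real ((m - 1) choose \<nu>) * X1 - real m * real ((m - 1) choose Suc \<nu>) * X2" .
  have "DERIV (bern_G m (Suc \<nu>)) u :> real m * real ((m - 1) choose \<nu>) * X1 - real m * real ((m - 1) choose Suc \<nu>) * X2"
    unfolding bern_G_def[abs_def] by (rule DERIV_cong[OF d eq])
  then show ?thesis unfolding X1_def X2_def by (simp add: mult.assoc)
qed

lemma dT:
  assumes "\<nu> < m"
  shows "DERIV (T m \<nu>) u :> real m * real ((m - 1) choose \<nu>) * u ^ \<nu> * (1 - u) ^ (m - 1 - \<nu>)"
proof -
  have "d < m \<longrightarrow> (\<forall>\<nu>. \<nu> = m - 1 - d \<longrightarrow> \<nu> < m \<longrightarrow>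
    DERIV (T m \<nu>) u :> real m * real ((m - 1) choose \<nu>) * u ^ \<nu> * (1 - u) ^ (m - 1 - \<nu>))" for d
  proof (induction d)
    case 0
    show ?case
    proof (intro allI impI)
      fix \<nu> assume h: "\<nu> = m - 1 - 0" "\<nu> < m" and "0 < m"
      then have mm: "m = Suc \<nu>" by simp
      have "T m \<nu> = (\<lambda>u. u ^ m)"
        using mm by (simp add: T_def bern_G_def fun_eq_iff)
      moreover have "DERIV (\<lambda>u. u ^ m) u :> real m * u ^ (m - 1)"
        by (auto intro!: derivative_eq_intros)
      ultimately show "DERIV (T m \<nu>) u :> real m * real ((m - 1) choose \<nu>) * u ^ \<nu> * (1 - u) ^ (m - 1 - \<nu>)"
        using mm by simp
    qed
  next
    case (Suc d)
    show ?case
    proof (intro allI impI)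
      fix \<nu> assume h: "\<nu> = m - 1 - Suc d" "\<nu> < m" and hd: "Suc d < m"
      show "DERIV (T m \<nu>) u :> real m * real ((m - 1) choose \<nu>) * u ^ \<nu> * (1 - u) ^ (m - 1 - \<nu>)"
      proof (cases "Suc \<nu> < m")
        case True
        have IH: "DERIV (T m (Suc \<nu>)) u :> real m * real ((m - 1) choose Suc \<nu>) * u ^ Suc \<nu> * (1 - u) ^ (m - 1 - Suc \<nu>)"
        proof -
          have e: "Suc \<nu> = m - 1 - d" using h hd by simp
          show ?thesis using Suc.IH e True hd by auto
        qed
        have "T m \<nu> = (\<lambda>u. bern_G m (Suc \<nu>) u + T m (Suc \<nu>) u)"
          unfolding T_def fun_eq_iff using True
          by (simp add: atLeastAtMostSuc_conv Icc_eq_insert_lb_nat)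
        moreover have "DERIV (\<lambda>u. bern_G m (Suc \<nu>) u + T m (Suc \<nu>) u) u :>
            (real m * real ((m - 1) choose \<nu>) * u ^ \<nu> * (1 - u) ^ (m - 1 - \<nu>)
            - real m * real ((m - 1) choose Suc \<nu>) * u ^ Suc \<nu> * (1 - u) ^ (m - 1 - Suc \<nu>))
            + real m * real ((m - 1) choose Suc \<nu>) * u ^ Suc \<nu> * (1 - u) ^ (m - 1 - Suc \<nu>)"
          using True by (intro DERIV_add dG IH) simp
        ultimately show ?thesis by simp
      next
        case False
        then have "\<nu> = m - 1" using h by simp
        then show ?thesis using h hd by simp
      qed
    qed
  qed
  from this[of "m - 1 - \<nu>"] show ?thesis using assms by auto
qed

lemma T_0: "T m \<nu> 0 = 0"
  unfolding T_def bern_G_def by (auto intro!: sum.neutral)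

lemma T_1: "\<nu> < m \<Longrightarrow> T m \<nu> 1 = 1"
proof -
  assume "\<nu> < m"
  then have "T m \<nu> 1 = (\<Sum>k\<in>{Suc \<nu>..m}. if k = m then 1 else 0)"
    unfolding T_def bern_G_def by (intro sum.cong) auto
  also have "\<dots> = 1" using \<open>\<nu> < m\<close> by simp
  finally show ?thesis .
qed

lemma cont_T: "isCont (T m \<nu>) u"
  unfolding T_def bern_G_def by (intro continuous_intros)

lemma surv_fden_ge:
  assumes "\<nu> < m" "0 \<le> a"
  shows "emeasure (density lborel (fden m \<nu>)) {a..} = ennreal (T m \<nu> (exp (- a)))"
proof -
  have "emeasure (density lborel (fden m \<nu>)) {a..} = (\<integral>\<^sup>+x. ennreal (fden m \<nu> x) * indicator {a..} x \<partial>lborel)"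
    by (simp add: emeasure_density)
  also have "\<dots> = 0 - (- T m \<nu> (exp (- a)))"
  proof (rule nn_integral_FTC_atLeast)
    show "fden m \<nu> \<in> borel_measurable borel" by simp
    fix x assume x: "a \<le> x"
    show "0 \<le> fden m \<nu> x" by (rule fden_nonneg)
    have d: "DERIV (\<lambda>x. - T m \<nu> (exp (- x))) x :>
       - (real m * real ((m - 1) choose \<nu>) * exp (- x) ^ \<nu> * (1 - exp (- x)) ^ (m - 1 - \<nu>) * (exp (- x) * (- 1)))"
      by (intro DERIV_minus DERIV_chain2[OF dT[OF assms(1)]]) (auto intro!: derivative_eq_intros)
    have "exp (- x) ^ \<nu> * exp (- x) = exp (- (real \<nu> + 1) * x)"
      by (simp add: exp_of_nat_mult[symmetric] exp_add[symmetric] algebra_simps)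
    then show "DERIV (\<lambda>x. - T m \<nu> (exp (- x))) x :> fden m \<nu> x"
      using x assms by (intro DERIV_cong[OF d]) (simp add: fden_def algebra_simps)
  next
    have "((\<lambda>x::real. exp (- x)) \<longlongrightarrow> (0::real)) at_top"
      by (intro filterlim_compose[OF exp_at_bot] filterlim_uminus_at_bot_at_top)
    then have "((\<lambda>x. T m \<nu> (exp (- x))) \<longlongrightarrow> T m \<nu> 0) at_top"
      by (intro isCont_tendsto_compose[OF cont_T])
    then show "((\<lambda>x. - T m \<nu> (exp (- x))) \<longlongrightarrow> 0) at_top"
      using tendsto_minus by (fastforce simp: T_0)
  qed
  finally show ?thesis by simp
qed

lemma surv_fden:
  assumes "\<nu> < m" "0 \<le> a"
  shows "emeasure (density lborel (fden m \<nu>)) {a<..} = ennreal (T m \<nu> (exp (- a)))"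
proof -
  have "emeasure (density lborel (fden m \<nu>)) {a<..} = (\<integral>\<^sup>+x. ennreal (fden m \<nu> x) * indicator {a<..} x \<partial>lborel)"
    by (simp add: emeasure_density)
  also have "\<dots> = (\<integral>\<^sup>+x. ennreal (fden m \<nu> x) * indicator {a..} x \<partial>lborel)"
    by (intro nn_integral_cong_AE) (use AE_lborel_singleton[of a] in \<open>auto elim!: eventually_mono split: split_indicator\<close>)
  also have "\<dots> = emeasure (density lborel (fden m \<nu>)) {a..}"
    by (simp add: emeasure_density)
  finally show ?thesis using surv_fden_ge[OF assms] by simp
qed

lemma surv_fden_neg:
  assumes "\<nu> < m" "a < 0"
  shows "emeasure (density lborel (fden m \<nu>)) {a<..} = 1"
proof -
  have "emeasure (density lborel (fden m \<nu>)) {a<..} = (\<integral>\<^sup>+x. ennreal (fden m \<nu> x) * indicator {a<..} x \<partial>lborel)"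
    by (simp add: emeasure_density)
  also have "\<dots> = (\<integral>\<^sup>+x. ennreal (fden m \<nu> x) * indicator {0..} x \<partial>lborel)"
    using assms by (intro nn_integral_cong) (auto simp: fden_def split: split_indicator)
  also have "\<dots> = emeasure (density lborel (fden m \<nu>)) {0..}"
    by (simp add: emeasure_density)
  finally show ?thesis using surv_fden_ge[OF assms(1), of 0] T_1[OF assms(1)] by simp
qed

lemma prob_fden:
  assumes "\<nu> < m"
  shows "prob_space (density lborel (fden m \<nu>))"
proof
  have "emeasure (density lborel (fden m \<nu>)) UNIV = (\<integral>\<^sup>+x. ennreal (fden m \<nu> x) * indicator UNIV x \<partial>lborel)"
    by (rule emeasure_density) auto
  also have "\<dots> = (\<integral>\<^sup>+x. ennreal (fden m \<nu> x) * indicator {-1<..} x \<partial>lborel)"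
    by (intro nn_integral_cong) (auto simp: fden_def split: split_indicator)
  also have "\<dots> = emeasure (density lborel (fden m \<nu>)) {-1<..}"
    by (rule emeasure_density[symmetric]) auto
  also have "\<dots> = 1" using surv_fden_neg[OF assms, of "-1"] by simp
  finally show "emeasure (density lborel (fden m \<nu>)) (space (density lborel (fden m \<nu>))) = 1"
    by simp
qed



lemma fden_mix:
  assumes "\<nu> < m"
  shows "density lborel (fden m \<nu>) = density lborel (mixd (real m) (psum {Suc \<nu>..m} (sgm m)))"
proof -
  have "d < m \<longrightarrow> (\<forall>\<nu>. \<nu> = m - 1 - d \<longrightarrow> \<nu> < m \<longrightarrow>
     density lborel (fden m \<nu>) = density lborel (mixd (real m) (psum {Suc \<nu>..m} (sgm m))))" for d
  proof (induction d)
    case 0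
    show ?case
    proof (intro allI impI)
      fix \<nu> assume h: "\<nu> = m - 1 - 0" "\<nu> < m" and "0 < m"
      then have mm: "m = Suc \<nu>" by simp
      have "{Suc \<nu>..m} = {m}" using mm by auto
      then have "mixd (real m) (psum {Suc \<nu>..m} (sgm m)) = (\<lambda>x. ennreal (exponential_density (real m) x))"
        using exp_mix[of m m] mm by (auto simp: psum_singleton sgm_def fun_eq_iff)
      moreover have "(\<lambda>x. ennreal (fden m \<nu> x)) = (\<lambda>x. ennreal (exponential_density (real m) x))"
        using mm by (auto simp: fun_eq_iff fden_def exponential_density_def algebra_simps)
      ultimately show "density lborel (fden m \<nu>) = density lborel (mixd (real m) (psum {Suc \<nu>..m} (sgm m)))"
        by simp
    qed
  next
    case (Suc d)
    show ?case
    proof (intro allI impI)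
      fix \<nu> assume h: "\<nu> = m - 1 - Suc d" "\<nu> < m" and hd: "Suc d < m"
      have e: "Suc \<nu> = m - 1 - d" using h hd by simp
      have sm: "Suc \<nu> < m" using h hd by simp
      have IH: "density lborel (fden m (Suc \<nu>)) = density lborel (mixd (real m) (psum {Suc (Suc \<nu>)..m} (sgm m)))"
        using Suc.IH e sm hd by auto
      let ?E = "\<lambda>x. ennreal (exponential_density (real (Suc \<nu>)) x)"
      let ?F = "\<lambda>x. ennreal (fden m (Suc \<nu>) x)"
      let ?P = "psum {Suc (Suc \<nu>)..m} (sgm m)"
      have finE: "finite_measure (density lborel ?E)"
        using prob_space_exponential_density[of "real (Suc \<nu>)"]
        by (simp add: prob_space_def)
      have finF: "finite_measure (density lborel ?F)"
        using prob_fden[OF sm] by (simp add: prob_space_def)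
      have em: "mixd (real m) (sgm m (Suc \<nu>)) = ?E"
        using exp_mix[of "Suc \<nu>" m] sm by (simp add: sgm_def fun_eq_iff)
      have "(\<lambda>x. ennreal (fden m \<nu> x)) = (\<lambda>x. \<integral>\<^sup>+y. ?E (x - y) * ?F y \<partial>lborel)"
        using conv_fden[of "Suc \<nu>" m] sm by (simp add: fun_eq_iff)
      then have "density lborel (fden m \<nu>) = convolution (density lborel ?E) (density lborel ?F)"
        using convolution_density[of ?E ?F, OF _ _ finE finF] by simp
      also have "\<dots> = convolution (density lborel (mixd (real m) (sgm m (Suc \<nu>)))) (density lborel (mixd (real m) ?P))"
        using em IH by simp
      also have "\<dots> = density lborel (\<lambda>x. \<integral>\<^sup>+y. mixd (real m) (sgm m (Suc \<nu>)) (x - y) * mixd (real m) ?P y \<partial>lborel)"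
        using finE finF em IH by (intro convolution_density) auto
      also have "\<dots> = density lborel (mixd (real m) (addp (sgm m (Suc \<nu>)) ?P))"
      proof -
        have p0: "pmf ?P 0 = 0"
        proof (cases "Suc (Suc \<nu>) \<le> m")
          case True
          then show ?thesis using psum_pmf0[of "{Suc (Suc \<nu>)..m}" m "\<lambda>j. j"] by simp
        next
          case False
          then show ?thesis using sm by simp
        qed
        show ?thesis
          using conv_mixd[of "real m" "sgm m (Suc \<nu>)" ?P] sm p0 by (simp add: sgm_def sg_pmf0)
      qed
      also have "addp (sgm m (Suc \<nu>)) ?P = psum {Suc \<nu>..m} (sgm m)"
      proof -
        have "{Suc \<nu>..m} = {Suc \<nu>} \<union> {Suc (Suc \<nu>)..m}" using sm by auto
        moreover have "psum ({Suc \<nu>} \<union> {Suc (Suc \<nu>)..m}) (sgm m) = addp (psum {Suc \<nu>} (sgm m)) (psum {Suc (Suc \<nu>)..m} (sgm m))"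
          by (rule psum_union) auto
        ultimately show ?thesis by (simp only: psum_singleton)
      qed
      finally show "density lborel (fden m \<nu>) = density lborel (mixd (real m) (psum {Suc \<nu>..m} (sgm m)))" .
    qed
  qed
  from this[of "m - 1 - \<nu>"] show ?thesis using assms by auto
qed



lemma psum_empty: "psum {} P = return_pmf 0"
  unfolding psum_def by (simp add: map_pmf_const)

lemma psum_insert:
  assumes "finite J" "x \<notin> J"
  shows "psum (insert x J) P = addp (P x) (psum J P)"
proof -
  have "psum ({x} \<union> J) P = addp (psum {x} P) (psum J P)"
    using assms by (intro psum_union) auto
  then show ?thesis by (simp add: psum_singleton)
qed

lemma psum_pmf0_gen:
  assumes "finite J" "J \<noteq> {}" "\<And>x. x \<in> J \<Longrightarrow> pmf (Q x) 0 = 0"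
  shows "pmf (psum J Q) 0 = 0"
  using assms
proof (induction J rule: finite_ne_induct)
  case (singleton x) then show ?case by (simp add: psum_singleton)
next
  case (insert x F)
  then show ?case by (simp add: psum_insert addp_pmf0)
qed

lemma psum_reindex:
  assumes "finite J" "inj_on f J"
  shows "psum (f ` J) Q = psum J (\<lambda>x. Q (f x))"
  using assms
proof (induction J rule: finite_induct)
  case empty then show ?case by (simp add: psum_empty)
next
  case (insert x F)
  then have "f x \<notin> f ` F" by auto
  then show ?case using insert by (simp add: psum_insert)
qed

lemma conv_step:
  fixes g :: "'i \<Rightarrow> real \<Rightarrow> ennreal"
  assumes fin: "finite I" and i: "i \<notin> I"
    and g[measurable]: "\<And>j. g j \<in> borel_measurable borel"
    and prob: "\<And>j. j \<in> insert i I \<Longrightarrow> prob_space (density lborel (g j))"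
  shows "distr (PiM (insert i I) (\<lambda>j. density lborel (g j))) lborel (\<lambda>z. \<Sum>j\<in>insert i I. z j)
       = convolution (density lborel (g i)) (distr (PiM I (\<lambda>j. density lborel (g j))) lborel (\<lambda>z. \<Sum>j\<in>I. z j))"
proof -
  let ?L = "\<lambda>j. density lborel (g j)"
  have "distr (PiM (insert i I) ?L) lborel (\<lambda>z. \<Sum>j\<in>insert i I. z j)
      = distr (distr (?L i \<Otimes>\<^sub>M PiM I ?L) (PiM (insert i I) ?L) (\<lambda>(x, X). X(i := x))) lborel (\<lambda>z. \<Sum>j\<in>insert i I. z j)"
    using distr_pair_PiM_eq_PiM[of I ?L i] prob by simp
  also have "\<dots> = distr (?L i \<Otimes>\<^sub>M PiM I ?L) lborel (\<lambda>(x, X). \<Sum>j\<in>insert i I. (X(i := x)) j)"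
    by (subst distr_distr) (auto simp: comp_def case_prod_beta')
  also have "\<dots> = distr (?L i \<Otimes>\<^sub>M PiM I ?L) borel (\<lambda>(x, X). x + (\<Sum>j\<in>I. X j))"
  proof (rule distr_cong)
    fix z assume "z \<in> space (?L i \<Otimes>\<^sub>M PiM I ?L)"
    obtain x X where z: "z = (x, X)" by (cases z)
    have "(\<Sum>j\<in>I. (X(i := x)) j) = (\<Sum>j\<in>I. X j)"
      using i by (intro sum.cong) auto
    then show "(\<lambda>(x, X). \<Sum>j\<in>insert i I. (X(i := x)) j) z = (\<lambda>(x, X). x + (\<Sum>j\<in>I. X j)) z"
      unfolding z using fin i by simp
  qed auto
  also have "\<dots> = distr (distr (?L i \<Otimes>\<^sub>M PiM I ?L) (?L i \<Otimes>\<^sub>M lborel) (\<lambda>(x, X). (x, \<Sum>j\<in>I. X j))) borel (\<lambda>(x, y). x + y)"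
    by (subst distr_distr) (auto simp: comp_def case_prod_beta')
  also have "distr (?L i \<Otimes>\<^sub>M PiM I ?L) (?L i \<Otimes>\<^sub>M lborel) (\<lambda>(x, X). (x, \<Sum>j\<in>I. X j))
      = distr (?L i) (?L i) (\<lambda>x. x) \<Otimes>\<^sub>M distr (PiM I ?L) lborel (\<lambda>X. \<Sum>j\<in>I. X j)"
  proof (rule pair_measure_distr[symmetric])
    show "(\<lambda>x. x) \<in> measurable (?L i) (?L i)" by simp
    show "(\<lambda>X. \<Sum>j\<in>I. X j) \<in> measurable (PiM I ?L) lborel" by measurable
    have "prob_space (PiM I ?L)" using prob by (intro prob_space_PiM) auto
    then have "prob_space (distr (PiM I ?L) lborel (\<lambda>X. \<Sum>j\<in>I. X j))"
      by (intro prob_space.prob_space_distr) auto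
    then show "sigma_finite_measure (distr (PiM I ?L) lborel (\<lambda>X. \<Sum>j\<in>I. X j))"
      by (simp add: prob_space_def finite_measure_def)
  qed
  finally show ?thesis unfolding convolution_def by simp
qed

lemma sum_PiM:
  fixes g :: "'i \<Rightarrow> real \<Rightarrow> ennreal" and J :: "'i \<Rightarrow> 'k set" and Q :: "'k \<Rightarrow> nat pmf"
  assumes "finite I" "I \<noteq> {}" and c: "0 < c"
    and g[measurable]: "\<And>j. g j \<in> borel_measurable borel"
    and prob: "\<And>i. i \<in> I \<Longrightarrow> prob_space (density lborel (g i))"
    and mix: "\<And>i. i \<in> I \<Longrightarrow> density lborel (g i) = density lborel (mixd c (psum (J i) Q))"
    and J: "\<And>i. i \<in> I \<Longrightarrow> finite (J i) \<and> J i \<noteq> {}"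
    and disj: "disjoint_family_on J I"
    and Q0: "\<And>x. pmf (Q x) 0 = 0"
  shows "distr (PiM I (\<lambda>i. density lborel (g i))) lborel (\<lambda>z. \<Sum>i\<in>I. z i)
       = density lborel (mixd c (psum (\<Union>i\<in>I. J i) Q))"
  using assms(1,2) prob mix J disj
proof (induction I rule: finite_ne_induct)
  case (singleton i)
  have "distr (PiM {i} (\<lambda>i. density lborel (g i))) lborel (\<lambda>z. \<Sum>i\<in>{i}. z i)
      = distr (PiM {i} (\<lambda>i. density lborel (g i))) (density lborel (g i)) (\<lambda>z. z i)"
    by (intro distr_cong) auto
  also have "\<dots> = density lborel (g i)"
    using singleton by (intro distr_PiM_component) auto
  finally show ?case using singleton by simp
next
  case (insert i I)
  let ?L = "\<lambda>j. density lborel (g j)"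
  have IH: "distr (PiM I ?L) lborel (\<lambda>z. \<Sum>i\<in>I. z i) = density lborel (mixd c (psum (\<Union>i\<in>I. J i) Q))"
    using insert by (intro insert.IH) (auto simp: disjoint_family_on_def)
  have probI: "prob_space (distr (PiM I ?L) lborel (\<lambda>z. \<Sum>i\<in>I. z i))"
  proof -
    have "prob_space (PiM I ?L)" using insert by (intro prob_space_PiM) auto
    then show ?thesis by (intro prob_space.prob_space_distr) auto
  qed
  have fin_i: "finite_measure (density lborel (mixd c (psum (J i) Q)))"
    using insert.prems(1)[of i] insert.prems(2)[of i] by (simp add: prob_space_def)
  have fin_I: "finite_measure (density lborel (mixd c (psum (\<Union>i\<in>I. J i) Q)))"
    using probI IH by (simp add: prob_space_def)
  have "distr (PiM (insert i I) ?L) lborel (\<lambda>z. \<Sum>i\<in>insert i I. z i)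
      = convolution (?L i) (distr (PiM I ?L) lborel (\<lambda>z. \<Sum>j\<in>I. z j))"
    using insert by (intro conv_step) auto
  also have "\<dots> = convolution (density lborel (mixd c (psum (J i) Q))) (density lborel (mixd c (psum (\<Union>i\<in>I. J i) Q)))"
    using IH insert.prems(2)[of i] by simp
  also have "\<dots> = density lborel (\<lambda>x. \<integral>\<^sup>+y. mixd c (psum (J i) Q) (x - y) * mixd c (psum (\<Union>i\<in>I. J i) Q) y \<partial>lborel)"
    by (intro convolution_density fin_i fin_I) auto
  also have "\<dots> = density lborel (mixd c (addp (psum (J i) Q) (psum (\<Union>i\<in>I. J i) Q)))"
  proof -
    have "pmf (psum (J i) Q) 0 = 0"
      using insert.prems(3)[of i] by (intro psum_pmf0_gen Q0) auto
    moreover have "pmf (psum (\<Union>i\<in>I. J i) Q) 0 = 0"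
      using insert.prems(3) insert.hyps by (intro psum_pmf0_gen Q0) auto
    ultimately show ?thesis using c by (simp add: conv_mixd)
  qed
  also have "addp (psum (J i) Q) (psum (\<Union>i\<in>I. J i) Q) = psum (\<Union>i\<in>insert i I. J i) Q"
  proof -
    have "J i \<inter> (\<Union>i\<in>I. J i) = {}"
      using insert.prems(4) insert.hyps unfolding disjoint_family_on_def by auto
    then have "psum (J i \<union> (\<Union>i\<in>I. J i)) Q = addp (psum (J i) Q) (psum (\<Union>i\<in>I. J i) Q)"
      using insert.prems(3) insert.hyps by (intro psum_union) auto
    then show ?thesis by simp
  qed
  finally show ?case .
qed



lemma bern_G_0: "bern_G m k 0 = (if k = 0 then 1 else 0)"
  by (simp add: bern_G_def)

lemma bern_G_sum: "(\<Sum>k\<le>m. bern_G m k u) = 1"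
  using binomial_ring[of u "1 - u" m] by (simp add: bern_G_def atLeast0AtMost ac_simps)

lemma c_eq:
  assumes "k \<le> m" "1 \<le> m"
  shows "(if 1 \<le> k then T m (k - 1) u else 0) + (if k < m then - T m k u else 0)
       = bern_G m k u - (if k = 0 then 1 else 0)"
proof (cases "k = 0")
  case True
  have "(\<Sum>k\<le>m. bern_G m k u) = bern_G m 0 u + (\<Sum>k\<in>{Suc 0..m}. bern_G m k u)"
    by (simp add: atMost_atLeast0 sum.atLeast_Suc_atMost)
  then have "T m 0 u = 1 - bern_G m 0 u" using bern_G_sum[of m u] by (simp add: T_def)
  then show ?thesis using True assms by simp
next
  case False
  have "T m (k - 1) u = bern_G m k u + T m k u"
  proof -
    have "{Suc (k - 1)..m} = insert k {Suc k..m}" using False assms by auto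
    then show ?thesis unfolding T_def by simp
  qed
  moreover have "k = m \<Longrightarrow> T m k u = 0" by (simp add: T_def)
  ultimately show ?thesis using False assms by auto
qed

lemma neg1_pow: "s \<le> n \<Longrightarrow> (-1::real) ^ (n + s) = (-1) ^ (n - s)"
proof -
  assume "s \<le> n"
  then have "n + s = (n - s) + 2 * s" by simp
  then have "(-1::real) ^ (n + s) = (-1) ^ ((n - s) + 2 * s)" by (rule arg_cong)
  also have "\<dots> = (-1) ^ (n - s) * ((-1) ^ 2) ^ s" by (simp only: power_add power_mult)
  finally show ?thesis by simp
qed

lemma gamma_T_identity:
  fixes u :: "nat \<Rightarrow> real"
  assumes m: "1 \<le> m" and cop: "is_copula n (bernstein_copula n m \<alpha>)" and u: "u \<in> unit_cube n"
  shows "(\<Sum>\<nu>\<in>gamma_grid n m. bern_gamma n \<alpha> \<nu> * (\<Prod>i<n. T m (\<nu> i) (u i))) = bernstein_copula n m \<alpha> u"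
proof -
  define A where "A = {..<n}"
  define sh where "sh \<nu> S = (\<lambda>i. if i < n then \<nu> i + (if i \<in> S then 1 else 0) else undefined)" for \<nu> :: "nat \<Rightarrow> nat" and S :: "nat set"
  define unsh where "unsh \<mu> S = (\<lambda>i. if i < n then \<mu> i - (if i \<in> S then 1 else 0) else undefined)" for \<mu> :: "nat \<Rightarrow> nat" and S :: "nat set"
  define V where "V S = {\<mu> \<in> alpha_grid n m. \<forall>i<n. (i \<in> S \<longrightarrow> 1 \<le> \<mu> i) \<and> (i \<notin> S \<longrightarrow> \<mu> i < m)}" for S
  define P where "P \<nu> = (\<Prod>i<n. T m (\<nu> i) (u i))" for \<nu> :: "nat \<Rightarrow> nat"
  define sg where "sg S = (-1::real) ^ (n + card S)" for S :: "nat set"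
  have fin_g: "finite (gamma_grid n m)" unfolding gamma_grid_def by (simp add: finite_PiE)
  have fin_a: "finite (alpha_grid n m)" unfolding alpha_grid_def by (simp add: finite_PiE)
  have "(\<Sum>\<nu>\<in>gamma_grid n m. bern_gamma n \<alpha> \<nu> * P \<nu>)
      = (\<Sum>S\<in>Pow A. \<Sum>\<nu>\<in>gamma_grid n m. sg S * \<alpha> (sh \<nu> S) * P \<nu>)"
    unfolding bern_gamma_def sum_distrib_right A_def sh_def sg_def
    by (subst sum.swap) simp
  also have "\<dots> = (\<Sum>S\<in>Pow A. \<Sum>\<mu>\<in>alpha_grid n m. \<alpha> \<mu> * (if \<mu> \<in> V S then sg S * P (unsh \<mu> S) else 0))"
  proof (rule sum.cong[OF refl])
    fix S assume S: "S \<in> Pow A"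
    have inv: "unsh (sh \<nu> S) S = \<nu>" if "\<nu> \<in> gamma_grid n m" for \<nu>
      using that unfolding unsh_def sh_def gamma_grid_def by (auto simp: fun_eq_iff PiE_def extensional_def)
    have inj: "inj_on (\<lambda>\<nu>. sh \<nu> S) (gamma_grid n m)"
      by (rule inj_on_inverseI[where g="\<lambda>\<mu>. unsh \<mu> S"]) (rule inv)
    have img: "(\<lambda>\<nu>. sh \<nu> S) ` gamma_grid n m = V S"
    proof
      show "(\<lambda>\<nu>. sh \<nu> S) ` gamma_grid n m \<subseteq> V S"
        using S unfolding V_def sh_def gamma_grid_def alpha_grid_def A_def
        by (auto simp: PiE_def extensional_def Suc_le_eq Pi_iff less_imp_le)
      show "V S \<subseteq> (\<lambda>\<nu>. sh \<nu> S) ` gamma_grid n m"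
      proof
        fix \<mu> assume \<mu>: "\<mu> \<in> V S"
        have "unsh \<mu> S \<in> gamma_grid n m"
          unfolding gamma_grid_def
        proof (rule PiE_I)
          fix i assume i: "i \<in> {..<n}"
          have "\<mu> i \<le> m" using \<mu> i by (auto simp: V_def alpha_grid_def PiE_iff)
          then show "unsh \<mu> S i \<in> {..<m}" using \<mu> i by (auto simp: V_def unsh_def)
        next
          fix i assume "i \<notin> {..<n}"
          then show "unsh \<mu> S i = undefined" by (simp add: unsh_def)
        qed
        moreover have "sh (unsh \<mu> S) S = \<mu>"
          using \<mu> unfolding V_def unsh_def sh_def alpha_grid_def
          by (auto simp: fun_eq_iff PiE_def extensional_def)
        ultimately show "\<mu> \<in> (\<lambda>\<nu>. sh \<nu> S) ` gamma_grid n m" by force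
      qed
    qed
    have "(\<Sum>\<nu>\<in>gamma_grid n m. sg S * \<alpha> (sh \<nu> S) * P \<nu>)
        = (\<Sum>\<nu>\<in>gamma_grid n m. (\<lambda>\<mu>. \<alpha> \<mu> * (sg S * P (unsh \<mu> S))) (sh \<nu> S))"
      by (intro sum.cong refl) (simp add: inv)
    also have "\<dots> = (\<Sum>\<mu>\<in>V S. \<alpha> \<mu> * (sg S * P (unsh \<mu> S)))"
      using sum.reindex[OF inj, of "\<lambda>\<mu>. \<alpha> \<mu> * (sg S * P (unsh \<mu> S))"] img by simp
    also have "\<dots> = (\<Sum>\<mu>\<in>alpha_grid n m. \<alpha> \<mu> * (if \<mu> \<in> V S then sg S * P (unsh \<mu> S) else 0))"
    proof -
      have "V S \<subseteq> alpha_grid n m" unfolding V_def by auto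
      then show ?thesis
        using fin_a by (simp add: sum.If_cases Int_absorb1 if_distrib[of "\<lambda>x. \<alpha> _ * x"] cong: if_cong)
    qed
    finally show "(\<Sum>\<nu>\<in>gamma_grid n m. sg S * \<alpha> (sh \<nu> S) * P \<nu>) = (\<Sum>\<mu>\<in>alpha_grid n m. \<alpha> \<mu> * (if \<mu> \<in> V S then sg S * P (unsh \<mu> S) else 0))" .
  qed
  also have "\<dots> = (\<Sum>\<mu>\<in>alpha_grid n m. \<alpha> \<mu> * (\<Sum>S\<in>Pow A. if \<mu> \<in> V S then sg S * P (unsh \<mu> S) else 0))"
    by (subst sum.swap) (simp add: sum_distrib_left)
  also have "\<dots> = (\<Sum>\<mu>\<in>alpha_grid n m. \<alpha> \<mu> * (\<Prod>i\<in>A. bern_G m (\<mu> i) (u i) + (- (if \<mu> i = 0 then 1 else 0))))"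
  proof (intro sum.cong refl arg_cong[where f="\<lambda>x. _ * x"])
    fix \<mu> assume \<mu>: "\<mu> \<in> alpha_grid n m"
    then have \<mu>m: "\<And>i. i \<in> A \<Longrightarrow> \<mu> i \<le> m" unfolding alpha_grid_def A_def by auto
    define f1 where "f1 i = (if 1 \<le> \<mu> i then T m (\<mu> i - 1) (u i) else 0)" for i
    define f2 where "f2 i = (if \<mu> i < m then - T m (\<mu> i) (u i) else 0)" for i
    have "(\<Prod>i\<in>A. bern_G m (\<mu> i) (u i) + (- (if \<mu> i = 0 then 1 else 0))) = (\<Prod>i\<in>A. f1 i + f2 i)"
      using c_eq[OF _ m] \<mu>m unfolding f1_def f2_def by (intro prod.cong refl) auto
    also have "\<dots> = (\<Sum>S\<in>Pow A. (\<Prod>i\<in>S. f1 i) * (\<Prod>i\<in>A - S. f2 i))"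
      by (rule prod_add) (simp add: A_def)
    also have "\<dots> = (\<Sum>S\<in>Pow A. if \<mu> \<in> V S then sg S * P (unsh \<mu> S) else 0)"
    proof (intro sum.cong refl)
      fix S assume S: "S \<in> Pow A"
      then have SA: "S \<subseteq> A" by simp
      have finA: "finite A" "finite S" "finite (A - S)" using SA by (auto simp: A_def intro: finite_subset)
      show "(\<Prod>i\<in>S. f1 i) * (\<Prod>i\<in>A - S. f2 i) = (if \<mu> \<in> V S then sg S * P (unsh \<mu> S) else 0)"
      proof (cases "\<mu> \<in> V S")
        case True
        then have v1: "\<And>i. i \<in> S \<Longrightarrow> 1 \<le> \<mu> i" and v2: "\<And>i. i \<in> A - S \<Longrightarrow> \<mu> i < m"
          using SA unfolding V_def A_def by auto
        have "(\<Prod>i\<in>S. f1 i) = (\<Prod>i\<in>S. T m (unsh \<mu> S i) (u i))"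
          using v1 SA unfolding f1_def unsh_def A_def by (intro prod.cong refl) auto
        moreover have "(\<Prod>i\<in>A - S. f2 i) = (\<Prod>i\<in>A - S. (-1) * T m (unsh \<mu> S i) (u i))"
          using v2 SA unfolding f2_def unsh_def A_def by (intro prod.cong refl) auto
        moreover have "(\<Prod>i\<in>A - S. (-1) * T m (unsh \<mu> S i) (u i)) = (-1) ^ card (A - S) * (\<Prod>i\<in>A - S. T m (unsh \<mu> S i) (u i))"
          unfolding prod.distrib prod_constant ..
        moreover have "P (unsh \<mu> S) = (\<Prod>i\<in>S. T m (unsh \<mu> S i) (u i)) * (\<Prod>i\<in>A - S. T m (unsh \<mu> S i) (u i))"
          unfolding P_def lessThan_def[symmetric] A_def[symmetric]
          using prod.subset_diff[OF SA finA(1), of "\<lambda>i. T m (unsh \<mu> S i) (u i)"] by (simp add: mult.commute)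
        moreover have "(-1::real) ^ card (A - S) = sg S"
        proof -
          have "card (A - S) = n - card S" using SA finA by (simp add: card_Diff_subset A_def)
          moreover have "card S \<le> n" using SA card_mono[OF finA(1) SA] by (simp add: A_def)
          ultimately show ?thesis unfolding sg_def using neg1_pow by simp
        qed
        ultimately show ?thesis using True by simp
      next
        case False
        then obtain i where i: "i < n" "(i \<in> S \<and> \<mu> i = 0) \<or> (i \<notin> S \<and> \<mu> i \<ge> m)"
          using \<mu> unfolding V_def by auto
        show ?thesis
        proof (cases "i \<in> S")
          case True
          then have "(\<Prod>i\<in>S. f1 i) = 0" using i finA True by (intro prod_zero) (auto simp: f1_def intro!: bexI[of _ i])
          then show ?thesis using False by simp
        next
          case False
          then have "i \<in> A - S" using i by (simp add: A_def)
          then have "(\<Prod>i\<in>A - S. f2 i) = 0" using i finA False by (intro prod_zero) (auto simp: f2_def intro!: bexI[of _ i])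
          then show ?thesis using \<open>\<mu> \<notin> V S\<close> by simp
        qed
      qed
    qed
    finally show "(\<Sum>S\<in>Pow A. if \<mu> \<in> V S then sg S * P (unsh \<mu> S) else 0) = (\<Prod>i\<in>A. bern_G m (\<mu> i) (u i) + (- (if \<mu> i = 0 then 1 else 0)))"
      by simp
  qed
  also have "\<dots> = (\<Sum>\<mu>\<in>alpha_grid n m. \<alpha> \<mu> * (\<Sum>X\<in>Pow A. (-1) ^ card X * (\<Prod>i\<in>A. bern_G m (\<mu> i) (if i \<in> X then 0 else u i))))"
  proof (intro sum.cong refl arg_cong[where f="\<lambda>x. _ * x"])
    fix \<mu>
    have "(\<Prod>i\<in>A. bern_G m (\<mu> i) (u i) + (- (if \<mu> i = 0 then 1 else 0)))
        = (\<Prod>i\<in>A. (- (if \<mu> i = 0 then 1 else 0)) + bern_G m (\<mu> i) (u i))"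
      by (simp add: add.commute)
    also have "\<dots> = (\<Sum>X\<in>Pow A. (\<Prod>i\<in>X. - (if \<mu> i = 0 then 1 else 0)) * (\<Prod>i\<in>A - X. bern_G m (\<mu> i) (u i)))"
      by (rule prod_add) (simp add: A_def)
    also have "\<dots> = (\<Sum>X\<in>Pow A. (-1) ^ card X * (\<Prod>i\<in>A. bern_G m (\<mu> i) (if i \<in> X then 0 else u i)))"
    proof (intro sum.cong refl)
      fix X assume "X \<in> Pow A"
      then have XA: "X \<subseteq> A" by simp
      have finA: "finite A" "finite X" using XA by (auto simp: A_def intro: finite_subset)
      have "(\<Prod>i\<in>X. - (if \<mu> i = 0 then 1 else 0)) = (\<Prod>i\<in>X. (-1) * bern_G m (\<mu> i) 0)"
        by (intro prod.cong refl) (simp add: bern_G_0)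
      also have "\<dots> = (-1) ^ card X * (\<Prod>i\<in>X. bern_G m (\<mu> i) 0)"
        unfolding prod.distrib prod_constant ..
      also have "(\<Prod>i\<in>X. bern_G m (\<mu> i) 0) = (\<Prod>i\<in>X. bern_G m (\<mu> i) (if i \<in> X then 0 else u i))"
        by (intro prod.cong refl) simp
      finally have 1: "(\<Prod>i\<in>X. - (if \<mu> i = 0 then 1 else 0)) = (-1) ^ card X * (\<Prod>i\<in>X. bern_G m (\<mu> i) (if i \<in> X then 0 else u i))" .
      have 2: "(\<Prod>i\<in>A - X. bern_G m (\<mu> i) (u i)) = (\<Prod>i\<in>A - X. bern_G m (\<mu> i) (if i \<in> X then 0 else u i))"
        by (intro prod.cong refl) auto
      have 3: "(\<Prod>i\<in>A. bern_G m (\<mu> i) (if i \<in> X then 0 else u i))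
          = (\<Prod>i\<in>X. bern_G m (\<mu> i) (if i \<in> X then 0 else u i)) * (\<Prod>i\<in>A - X. bern_G m (\<mu> i) (if i \<in> X then 0 else u i))"
        using prod.subset_diff[OF XA finA(1), of "\<lambda>i. bern_G m (\<mu> i) (if i \<in> X then 0 else u i)"]
        by (simp only: mult.commute)
      show "(\<Prod>i\<in>X. - (if \<mu> i = 0 then 1 else 0)) * (\<Prod>i\<in>A - X. bern_G m (\<mu> i) (u i))
          = (-1) ^ card X * (\<Prod>i\<in>A. bern_G m (\<mu> i) (if i \<in> X then 0 else u i))"
        unfolding 1 2 3 by simp
    qed
    finally show "(\<Prod>i\<in>A. bern_G m (\<mu> i) (u i) + (- (if \<mu> i = 0 then 1 else 0)))
       = (\<Sum>X\<in>Pow A. (-1) ^ card X * (\<Prod>i\<in>A. bern_G m (\<mu> i) (if i \<in> X then 0 else u i)))" .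
  qed
  also have "\<dots> = (\<Sum>\<mu>\<in>alpha_grid n m. \<Sum>X\<in>Pow A. (-1) ^ card X * (\<alpha> \<mu> * (\<Prod>i\<in>A. bern_G m (\<mu> i) (if i \<in> X then 0 else u i))))"
    by (intro sum.cong refl) (simp add: sum_distrib_left mult.left_commute)
  also have "\<dots> = (\<Sum>X\<in>Pow A. \<Sum>\<mu>\<in>alpha_grid n m. (-1) ^ card X * (\<alpha> \<mu> * (\<Prod>i\<in>A. bern_G m (\<mu> i) (if i \<in> X then 0 else u i))))"
    by (rule sum.swap)
  also have "\<dots> = (\<Sum>X\<in>Pow A. (-1) ^ card X * bernstein_copula n m \<alpha> (\<lambda>i. if i \<in> X then 0 else u i))"
    unfolding bernstein_copula_def A_def by (simp only: sum_distrib_left)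
  also have "\<dots> = (\<Sum>X\<in>{{}}. (-1) ^ card X * bernstein_copula n m \<alpha> (\<lambda>i. if i \<in> X then 0 else u i))"
  proof (rule sum.mono_neutral_right)
    show "finite (Pow A)" by (simp add: A_def)
    show "{{}} \<subseteq> Pow A" by simp
    show "\<forall>X\<in>Pow A - {{}}. (-1) ^ card X * bernstein_copula n m \<alpha> (\<lambda>i. if i \<in> X then 0 else u i) = 0"
    proof
      fix X assume X: "X \<in> Pow A - {{}}"
      then obtain i where i: "i \<in> X" "i < n" by (auto simp: A_def)
      have uc: "(\<lambda>i. if i \<in> X then 0 else u i) \<in> unit_cube n" using u by (auto simp: unit_cube_def)
      then have "bernstein_copula n m \<alpha> (\<lambda>i. if i \<in> X then 0 else u i) = 0"
      proof -
        have g: "\<forall>u\<in>unit_cube n. (\<exists>i<n. u i = 0) \<longrightarrow> bernstein_copula n m \<alpha> u = 0"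
          using cop unfolding is_copula_def by blast
        have ex: "\<exists>j<n. (\<lambda>i. if i \<in> X then 0 else u i) j = 0" using i by auto
        show ?thesis by (rule g[rule_format, OF uc ex])
      qed
      then show "(-1) ^ card X * bernstein_copula n m \<alpha> (\<lambda>i. if i \<in> X then 0 else u i) = 0" by simp
    qed
  qed
  also have "\<dots> = bernstein_copula n m \<alpha> u" by simp
  finally show ?thesis unfolding P_def .
qed



lemma gen_sets:
  fixes I :: "nat set"
  assumes fin: "finite I"
  defines "Gen \<equiv> {{f\<in>(\<Pi>\<^sub>E i\<in>I. (UNIV::real set)). \<forall>i\<in>j. f i \<in> A i} | A j. j \<in> {I} \<and> A \<in> Pi j (\<lambda>_. range greaterThan)}"
  shows "sets (PiM I (\<lambda>_. lborel::real measure)) = sigma_sets (\<Pi>\<^sub>E i\<in>I. UNIV) Gen"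
proof -
  have "sets (PiM I (\<lambda>_. lborel::real measure)) = sets (PiM I (\<lambda>_. sigma (UNIV::real set) (range greaterThan)))"
    by (rule sets_PiM_cong) (simp_all add: borel_Ioi[symmetric])
  also have "\<dots> = sets (sigma (\<Pi>\<^sub>E i\<in>I. UNIV) Gen)"
    unfolding Gen_def
  proof (rule sets_PiM_sigma)
    fix i :: nat
    show "\<exists>S\<subseteq>range greaterThan. countable S \<and> (UNIV::real set) = \<Union>S"
    proof (intro exI[of _ "range (\<lambda>k::nat. {- real k<..})"] conjI)
      show "range (\<lambda>k::nat. {- real k<..}) \<subseteq> range greaterThan" by auto
      show "countable (range (\<lambda>k::nat. {- real k<..}))" by simp
      show "(UNIV::real set) = \<Union>(range (\<lambda>k::nat. {- real k<..}))"
      proof (safe)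
        fix x :: real
        obtain k :: nat where "- x < real k" using reals_Archimedean2 by blast
        then show "x \<in> \<Union>(range (\<lambda>k::nat. {- real k<..}))" by (auto intro!: exI[of _ k])
      qed auto
    qed
  qed (use fin in auto)
  also have "\<dots> = sigma_sets (\<Pi>\<^sub>E i\<in>I. UNIV) Gen"
    by (rule sets_measure_of) (auto simp: Gen_def)
  finally show ?thesis .
qed

lemma indicator_PiE_prod:
  fixes A :: "nat \<Rightarrow> real set"
  assumes "finite I" "z \<in> (\<Pi>\<^sub>E i\<in>I. UNIV)"
  shows "(indicator (\<Pi>\<^sub>E i\<in>I. A i) z :: ennreal) = (\<Prod>i\<in>I. indicator (A i) (z i))"
proof (cases "\<forall>i\<in>I. z i \<in> A i")
  case True
  then have "z \<in> (\<Pi>\<^sub>E i\<in>I. A i)" using assms by (auto simp: PiE_def)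
  then show ?thesis using True by simp
next
  case False
  then obtain i where i: "i \<in> I" "z i \<notin> A i" by auto
  then have "z \<notin> (\<Pi>\<^sub>E i\<in>I. A i)" by auto
  moreover have "(\<Prod>i\<in>I. indicator (A i) (z i) :: ennreal) = 0"
    using i assms by (intro prod_zero) (auto intro!: bexI[of _ i])
  ultimately show ?thesis by simp
qed

lemma PiM_density_prod:
  fixes f :: "nat \<Rightarrow> real \<Rightarrow> real"
  assumes fin: "finite I" and f[measurable]: "\<And>i. f i \<in> borel_measurable borel"
    and prob: "\<And>i. prob_space (density lborel (f i))"
  shows "density (PiM I (\<lambda>_. lborel)) (\<lambda>z. \<Prod>i\<in>I. ennreal (f i (z i))) = PiM I (\<lambda>i. density lborel (f i))"
proof -
  interpret P: product_sigma_finite "\<lambda>i. density lborel (f i)"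
    unfolding product_sigma_finite_def using prob by (simp add: prob_space_imp_sigma_finite)
  interpret L: product_sigma_finite "\<lambda>_::nat. lborel::real measure"
    unfolding product_sigma_finite_def by (simp add: sigma_finite_lborel)
  show ?thesis
  proof (rule P.PiM_eqI[OF fin])
    show "sets (density (PiM I (\<lambda>_. lborel)) (\<lambda>z. \<Prod>i\<in>I. ennreal (f i (z i)))) = sets (PiM I (\<lambda>i. density lborel (f i)))"
      unfolding sets_density by (rule sets_PiM_cong) simp_all
    fix A assume A: "\<And>i. i \<in> I \<Longrightarrow> A i \<in> sets (density lborel (f i))"
    then have A'[measurable]: "\<And>i. i \<in> I \<Longrightarrow> A i \<in> sets borel" by simp
    have PA: "(\<Pi>\<^sub>E i\<in>I. A i) \<in> sets (PiM I (\<lambda>_. lborel::real measure))"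
      using fin A' by (intro sets_PiM_I_finite) auto
    have "emeasure (density (PiM I (\<lambda>_. lborel)) (\<lambda>z. \<Prod>i\<in>I. ennreal (f i (z i)))) (\<Pi>\<^sub>E i\<in>I. A i)
        = (\<integral>\<^sup>+z. (\<Prod>i\<in>I. ennreal (f i (z i))) * indicator (\<Pi>\<^sub>E i\<in>I. A i) z \<partial>PiM I (\<lambda>_. lborel))"
      by (rule emeasure_density[OF _ PA]) simp
    also have "\<dots> = (\<integral>\<^sup>+z. (\<Prod>i\<in>I. ennreal (f i (z i)) * indicator (A i) (z i)) \<partial>PiM I (\<lambda>_. lborel))"
    proof (intro nn_integral_cong)
      fix z assume "z \<in> space (PiM I (\<lambda>_. lborel::real measure))"
      then have z: "z \<in> (\<Pi>\<^sub>E i\<in>I. UNIV)" by (simp add: space_PiM)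
      show "(\<Prod>i\<in>I. ennreal (f i (z i))) * indicator (\<Pi>\<^sub>E i\<in>I. A i) z
          = (\<Prod>i\<in>I. ennreal (f i (z i)) * indicator (A i) (z i))"
        unfolding indicator_PiE_prod[OF fin z] by (rule prod.distrib[symmetric])
    qed
    also have "\<dots> = (\<Prod>i\<in>I. \<integral>\<^sup>+x. ennreal (f i x) * indicator (A i) x \<partial>lborel)"
      using fin A' by (intro L.product_nn_integral_prod) auto
    also have "\<dots> = (\<Prod>i\<in>I. emeasure (density lborel (f i)) (A i))"
      using A' by (intro prod.cong refl) (simp add: emeasure_density)
    finally show "emeasure (density (PiM I (\<lambda>_. lborel)) (\<lambda>z. \<Prod>i\<in>I. ennreal (f i (z i)))) (\<Pi>\<^sub>E i\<in>I. A i)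
        = (\<Prod>i\<in>I. emeasure (density lborel (f i)) (A i))" .
  qed
qed

lemma sum_law_nu:
  assumes n: "1 \<le> n" and m: "1 \<le> m" and \<nu>: "\<nu> \<in> gamma_grid n m"
  shows "distr (PiM {..<n} (\<lambda>i. density lborel (fden m (\<nu> i)))) lborel (\<lambda>z. \<Sum>i<n. z i)
       = density lborel (mixd (real m) (map_pmf (K_of n m \<nu>) (Delta_pmf n m)))"
proof -
  have \<nu>m: "\<And>i. i < n \<Longrightarrow> \<nu> i < m" using \<nu> by (auto simp: gamma_grid_def PiE_iff)
  let ?J = "\<lambda>i. {i} \<times> {Suc (\<nu> i)..m}"
  let ?Q = "\<lambda>(i::nat, j). sgm m j"
  have "distr (PiM {..<n} (\<lambda>i. density lborel (fden m (\<nu> i)))) lborel (\<lambda>z. \<Sum>i\<in>{..<n}. z i)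
      = density lborel (mixd (real m) (psum (\<Union>i\<in>{..<n}. ?J i) ?Q))"
  proof (rule sum_PiM)
    show "finite {..<n}" "{..<n} \<noteq> {}" using n by (auto simp: lessThan_empty_iff)
    show "0 < real m" using m by simp
    fix i assume i: "i \<in> {..<n}"
    show "prob_space (density lborel (\<lambda>x. ennreal (fden m (\<nu> i) x)))"
      using prob_fden[OF \<nu>m] i by simp
    have "?J i = Pair i ` {Suc (\<nu> i)..m}" by auto
    then have "psum (?J i) ?Q = psum (Pair i ` {Suc (\<nu> i)..m}) ?Q" by (simp only:)
    also have "\<dots> = psum {Suc (\<nu> i)..m} (sgm m)"
      by (subst psum_reindex) (auto simp: inj_on_def)
    finally show "density lborel (\<lambda>x. ennreal (fden m (\<nu> i) x)) = density lborel (mixd (real m) (psum (?J i) ?Q))"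
      using fden_mix[OF \<nu>m] i by simp
    show "finite (?J i) \<and> ?J i \<noteq> {}" using \<nu>m[of i] i by auto
  next
    show "disjoint_family_on ?J {..<n}" by (auto simp: disjoint_family_on_def)
    fix x :: "nat \<times> nat" show "pmf (?Q x) 0 = 0" by (cases x) (simp add: sgm_def sg_pmf0)
  qed simp
  also have "psum (\<Union>i\<in>{..<n}. ?J i) ?Q = map_pmf (K_of n m \<nu>) (Delta_pmf n m)"
  proof -
    have sub: "(\<Union>i\<in>{..<n}. ?J i) \<subseteq> {..<n} \<times> {1..m}" by auto
    have D: "Delta_pmf n m = Pi_pmf ({..<n} \<times> {1..m}) 0 ?Q"
      unfolding Delta_pmf_def sgm_def by simp
    have K: "K_of n m \<nu> d = (\<Sum>x\<in>(\<Union>i\<in>{..<n}. ?J i). d x)" for d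
    proof -
      have e: "(\<Union>i\<in>{..<n}. ?J i) = Sigma {..<n} (\<lambda>i. {Suc (\<nu> i)..m})" by auto
      have "K_of n m \<nu> d = (\<Sum>i\<in>{..<n}. \<Sum>j\<in>{Suc (\<nu> i)..m}. d (i, j))"
        unfolding K_of_def by simp
      also have "\<dots> = (\<Sum>(i, j)\<in>Sigma {..<n} (\<lambda>i. {Suc (\<nu> i)..m}). d (i, j))"
        by (rule sum.Sigma) auto
      also have "\<dots> = (\<Sum>x\<in>Sigma {..<n} (\<lambda>i. {Suc (\<nu> i)..m}). d x)"
        by (simp add: case_prod_beta')
      finally show ?thesis unfolding e .
    qed
    show ?thesis unfolding D K[abs_def] by (rule psum_subset[symmetric]) (use sub in auto)
  qed
  finally show ?thesis by simp
qed



lemma K_pmf_bind: "K_pmf n m Npmf = bind_pmf Npmf (\<lambda>\<nu>. map_pmf (K_of n m \<nu>) (Delta_pmf n m))"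
  unfolding K_pmf_def map_pmf_def ..

lemma set_N:
  assumes N_law: "\<And>\<nu>. pmf Npmf \<nu> = (if \<nu> \<in> gamma_grid n m then bern_gamma n \<alpha> \<nu> else 0)"
  shows "set_pmf Npmf \<subseteq> gamma_grid n m"
  using N_law by (auto simp: set_pmf_eq)

lemma K_pmf_sum:
  assumes N_law: "\<And>\<nu>. pmf Npmf \<nu> = (if \<nu> \<in> gamma_grid n m then bern_gamma n \<alpha> \<nu> else 0)"
  shows "pmf (K_pmf n m Npmf) l = (\<Sum>\<nu>\<in>gamma_grid n m. bern_gamma n \<alpha> \<nu> * pmf (map_pmf (K_of n m \<nu>) (Delta_pmf n m)) l)"
proof -
  have fin: "finite (gamma_grid n m)" unfolding gamma_grid_def by (simp add: finite_PiE)
  have "pmf (K_pmf n m Npmf) l = (\<integral>\<nu>. pmf (map_pmf (K_of n m \<nu>) (Delta_pmf n m)) l \<partial>measure_pmf Npmf)"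
    unfolding K_pmf_bind pmf_bind ..
  also have "\<dots> = (\<Sum>\<nu>\<in>gamma_grid n m. pmf Npmf \<nu> *\<^sub>R pmf (map_pmf (K_of n m \<nu>) (Delta_pmf n m)) l)"
    using set_N[OF N_law] by (intro integral_measure_pmf[OF fin]) auto
  also have "\<dots> = (\<Sum>\<nu>\<in>gamma_grid n m. bern_gamma n \<alpha> \<nu> * pmf (map_pmf (K_of n m \<nu>) (Delta_pmf n m)) l)"
    using N_law by (intro sum.cong refl) simp
  finally show ?thesis .
qed

lemma K_small:
  assumes \<nu>: "\<nu> \<in> gamma_grid n m" and l: "l < n"
  shows "pmf (map_pmf (K_of n m \<nu>) (Delta_pmf n m)) l = 0"
proof -
  have \<nu>m: "\<And>i. i < n \<Longrightarrow> \<nu> i < m" using \<nu> by (auto simp: gamma_grid_def PiE_iff)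
  have ge: "n \<le> K_of n m \<nu> d" if d: "d \<in> set_pmf (Delta_pmf n m)" for d
  proof -
    have fD: "finite ({..<n} \<times> {1..m})" by simp
    have pos: "1 \<le> d (i, j)" if "i < n" "1 \<le> j" "j \<le> m" for i j
    proof -
      have sub: "set_pmf (Pi_pmf ({..<n} \<times> {1..m}) 0 (\<lambda>(i, j). shifted_geometric_pmf (real j / real m)))
          \<subseteq> PiE_dflt ({..<n} \<times> {1..m}) 0 (set_pmf \<circ> (\<lambda>(i, j). shifted_geometric_pmf (real j / real m)))"
        by (rule set_Pi_pmf_subset'[OF fD])
      have "d \<in> PiE_dflt ({..<n} \<times> {1..m}) 0 (set_pmf \<circ> (\<lambda>(i, j). shifted_geometric_pmf (real j / real m)))"
        using d sub unfolding Delta_pmf_def by blast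
      then have "d (i, j) \<in> set_pmf (shifted_geometric_pmf (real j / real m))"
        using that by (auto simp: PiE_dflt_def)
      moreover have "0 \<notin> set_pmf (shifted_geometric_pmf (real j / real m))"
        using sg_pmf0 by (simp add: set_pmf_eq)
      ultimately show ?thesis by (cases "d (i, j)") auto
    qed
    have "n = (\<Sum>i<n. 1::nat)" by simp
    also have "\<dots> \<le> (\<Sum>i<n. \<Sum>j\<in>{\<nu> i + 1..m}. d (i, j))"
    proof (intro sum_mono)
      fix i assume i: "i \<in> {..<n}"
      then have "m \<in> {\<nu> i + 1..m}" using \<nu>m[of i] by auto
      then have "d (i, m) \<le> (\<Sum>j\<in>{\<nu> i + 1..m}. d (i, j))"
        by (intro member_le_sum) auto
      moreover have "1 \<le> d (i, m)" using pos[of i m] i \<nu>m[of i] by auto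
      ultimately show "1 \<le> (\<Sum>j\<in>{\<nu> i + 1..m}. d (i, j))" by simp
    qed
    finally show ?thesis unfolding K_of_def .
  qed
  have "l \<notin> set_pmf (map_pmf (K_of n m \<nu>) (Delta_pmf n m))"
    using ge l by (auto simp: not_le[symmetric])
  then show ?thesis by (simp add: set_pmf_eq)
qed

lemma mixd_target:
  assumes n: "2 \<le> n" and m: "1 \<le> m" and hK: "\<And>l. l < n \<Longrightarrow> pmf K l = 0"
  shows "mixd (real m) K x = ennreal (if 0 < x then
                   (\<Sum>k. pmf K (k + n) * exp (- real m * x) * x ^ (k + n - 1)
                          * real m ^ (k + n) / Gamma (real (k + n)))
                 else 0)"
proof -
  define f where "f l = ennreal (pmf K l) * ennreal (erl (real m) l x)" for l
  define t where "t k = pmf K (k + n) * exp (- real m * x) * x ^ (k + n - 1) * real m ^ (k + n) / Gamma (real (k + n))" for k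
  have erl_eq: "erl (real m) (k + n) x = (if x < 0 then 0 else exp (- real m * x) * x ^ (k + n - 1) * real m ^ (k + n) / Gamma (real (k + n)))" for k
  proof -
    have kn: "k + n = Suc (k + n - 1)" using n by simp
    have "Gamma (real (k + n)) = fact (k + n - 1)"
      using Gamma_fact[of "k + n - 1"] kn by (metis of_nat_Suc add.commute)
    then show ?thesis using n unfolding erl_def erlang_density_def
      by (subst (1 2) kn) (simp add: field_simps)
  qed
  have fk: "f (k + n) = ennreal (pmf K (k + n) * erl (real m) (k + n) x)" for k
    unfolding f_def using m by (simp add: ennreal_mult erl_nonneg)
  have "mixd (real m) K x = (\<Sum>l. f l)" unfolding mixd_suminf f_def ..
  also have "\<dots> = (\<Sum>k. f (k + n)) + (\<Sum>j<n. f j)"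
    by (rule suminf_offset) (rule summableI)
  also have "(\<Sum>j<n. f j) = 0" using hK by (simp add: f_def)
  finally have eq: "mixd (real m) K x = (\<Sum>k. ennreal (pmf K (k + n) * erl (real m) (k + n) x))" by (simp add: fk)
  show ?thesis
  proof (cases "0 < x")
    case True
    then have te: "pmf K (k + n) * erl (real m) (k + n) x = t k" for k
      unfolding t_def erl_eq by simp
    have tn: "0 \<le> t k" for k using te[of k, symmetric] m by (simp add: erl_nonneg)
    have sb: "summable (\<lambda>k. real m * exp (- real m * x) * ((real m * x) ^ (k + (n - 1)) / fact (k + (n - 1))))"
    proof -
      have "summable (\<lambda>j. (real m * x) ^ j /\<^sub>R fact j)" by (rule summable_exp_generic)
      then have "summable (\<lambda>j. (real m * x) ^ j / fact j)" by (simp add: divide_inverse mult.commute)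
      then have "summable (\<lambda>k. (real m * x) ^ (k + (n - 1)) / fact (k + (n - 1)))"
        by (subst summable_iff_shift)
      then show ?thesis by (rule summable_mult)
    qed
    have "summable t"
    proof (rule summable_comparison_test'[OF sb])
      fix k :: nat
      have "erl (real m) (k + n) x = real m * exp (- real m * x) * ((real m * x) ^ (k + (n - 1)) / fact (k + (n - 1)))"
      proof -
        have kn: "k + n - 1 = k + (n - 1)" "k + n = Suc (k + (n - 1))" using n by auto
        show ?thesis using True unfolding erl_def erlang_density_def kn
          by (simp add: power_mult_distrib field_simps)
      qed
      moreover have "pmf K (k + n) * erl (real m) (k + n) x \<le> erl (real m) (k + n) x"
        using m by (intro mult_left_le_one_le) (auto simp: erl_nonneg pmf_le_1)
      ultimately show "norm (t k) \<le> real m * exp (- real m * x) * ((real m * x) ^ (k + (n - 1)) / fact (k + (n - 1)))"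
        using tn[of k] te[of k] by simp
    qed
    then have "(\<Sum>k. ennreal (t k)) = ennreal (\<Sum>k. t k)"
      using tn by (intro suminf_ennreal2) auto
    then show ?thesis using eq True te unfolding t_def by simp
  next
    case False
    have "erl (real m) (k + n) x = 0" for k
    proof (cases "x < 0")
      case True then show ?thesis by (simp add: erl_def erlang_density_def)
    next
      case False': False
      then have "x = 0" using False by simp
      then show ?thesis using n by (simp add: erl_def erlang_density_def)
    qed
    then show ?thesis using eq False by simp
  qed
qed



lemma T_nonneg: "0 \<le> u \<Longrightarrow> u \<le> 1 \<Longrightarrow> 0 \<le> T m \<nu> u"
  unfolding T_def bern_G_def by (intro sum_nonneg) auto

lemma surv_T:
  assumes "\<nu> < m"
  shows "emeasure (density lborel (fden m \<nu>)) {a<..} = ennreal (T m \<nu> (exp (- max a 0)))"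
proof (cases "0 \<le> a")
  case True then show ?thesis using surv_fden[OF assms True] by simp
next
  case False then show ?thesis using surv_fden_neg[OF assms] T_1[OF assms] by simp
qed

theorem theorem3:
  fixes n m :: nat
    and \<alpha> :: "(nat \<Rightarrow> nat) \<Rightarrow> real"
    and M :: "'a measure"
    and Z :: "nat \<Rightarrow> 'a \<Rightarrow> real"
    and Npmf :: "(nat \<Rightarrow> nat) pmf"
  assumes n: "n \<ge> 2" and m: "m \<ge> 1"
    and copula: "is_copula n (bernstein_copula n m \<alpha>)"
    and M: "prob_space M"
    and Z_exp: "\<And>i. i < n \<Longrightarrow> distributed M lborel (Z i) (exponential_density 1)"
    and Z_surv: "\<And>z. (\<forall>i<n. 0 \<le> z i) \<Longrightarrow>
        measure M {\<omega> \<in> space M. \<forall>i<n. Z i \<omega> > z i}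
          = bernstein_copula n m \<alpha> (\<lambda>i. exp (- z i))"
    and N_law: "\<And>\<nu>. pmf Npmf \<nu> = (if \<nu> \<in> gamma_grid n m then bern_gamma n \<alpha> \<nu> else 0)"
  shows "distributed M lborel (\<lambda>\<omega>. \<Sum>i<n. Z i \<omega>)
           (\<lambda>x. if 0 < x then
                   (\<Sum>k. pmf (K_pmf n m Npmf) (k + n) * exp (- real m * x) * x ^ (k + n - 1)
                          * real m ^ (k + n) / Gamma (real (k + n)))
                 else 0)
       \<and> (\<forall>l<n. pmf (K_pmf n m Npmf) l = 0)
       \<and> (\<forall>l. pmf (K_pmf n m Npmf) l =
            (\<Sum>\<nu>\<in>gamma_grid n m. bern_gamma n \<alpha> \<nu> *
               measure_pmf.prob (Delta_pmf n m) {d. K_of n m \<nu> d = l}))"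
proof -
  interpret prob_space M by (rule M)
  let ?K = "K_pmf n m Npmf"
  let ?G = "gamma_grid n m"
  let ?Kn = "\<lambda>\<nu>. map_pmf (K_of n m \<nu>) (Delta_pmf n m)"
  have finG: "finite ?G" unfolding gamma_grid_def by (simp add: finite_PiE)
  have \<gamma>nn: "\<And>\<nu>. \<nu> \<in> ?G \<Longrightarrow> 0 \<le> bern_gamma n \<alpha> \<nu>"
    using N_law by (metis pmf_nonneg)
  have \<nu>m: "\<And>\<nu> i. \<nu> \<in> ?G \<Longrightarrow> i < n \<Longrightarrow> \<nu> i < m"
    by (auto simp: gamma_grid_def PiE_iff)
  have c3: "\<forall>l. pmf ?K l = (\<Sum>\<nu>\<in>?G. bern_gamma n \<alpha> \<nu> * measure_pmf.prob (Delta_pmf n m) {d. K_of n m \<nu> d = l})"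
  proof
    fix l
    have "\<And>\<nu>. {d. K_of n m \<nu> d = l} = K_of n m \<nu> -` {l}" by auto
    then show "pmf ?K l = (\<Sum>\<nu>\<in>?G. bern_gamma n \<alpha> \<nu> * measure_pmf.prob (Delta_pmf n m) {d. K_of n m \<nu> d = l})"
      unfolding K_pmf_sum[OF N_law] pmf_map by simp
  qed
  have c2: "\<forall>l<n. pmf ?K l = 0"
    unfolding K_pmf_sum[OF N_law] by (auto intro!: sum.neutral simp: K_small)
  have Zm: "\<And>i. i < n \<Longrightarrow> Z i \<in> borel_measurable M"
    using Z_exp distributed_measurable by (metis measurable_lborel1)
  let ?Lb = "PiM {..<n} (\<lambda>_. lborel::real measure)"
  let ?\<Omega> = "\<Pi>\<^sub>E i\<in>{..<n}. (UNIV::real set)"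
  define g where "g z = (\<Sum>\<nu>\<in>?G. ennreal (bern_gamma n \<alpha> \<nu>) * (\<Prod>i<n. ennreal (fden m (\<nu> i) (z i))))" for z :: "nat \<Rightarrow> real"
  define Zv where "Zv \<omega> = (\<lambda>i\<in>{..<n}. Z i \<omega>)" for \<omega>
  have gm[measurable]: "g \<in> borel_measurable ?Lb"
    unfolding g_def by measurable
  have Zvm[measurable]: "Zv \<in> measurable M ?Lb"
    unfolding Zv_def by (rule measurable_restrict) (simp add: Zm)
  interpret L: product_sigma_finite "\<lambda>_::nat. lborel::real measure"
    unfolding product_sigma_finite_def by (simp add: sigma_finite_lborel)
  have posZ: "AE \<omega> in M. \<forall>i\<in>{..<n}. 0 < Z i \<omega>"
  proof (rule AE_finite_allI)
    fix i assume i: "i \<in> {..<n}"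
    have eq: "distr M lborel (Z i) = density lborel (\<lambda>x. ennreal (exponential_density 1 x))"
      using distributed_distr_eq_density[OF Z_exp] i by auto
    have "AE x in distr M lborel (Z i). 0 < x"
      unfolding eq
    proof (subst AE_density)
      show "AE x in lborel. 0 < ennreal (exponential_density 1 x) \<longrightarrow> 0 < x"
        using AE_lborel_singleton[of 0]
        by (auto elim!: eventually_mono simp: exponential_density_def)
    qed simp
    then show "AE \<omega> in M. 0 < Z i \<omega>"
      using i Zm by (subst (asm) AE_distr_iff) auto
  qed simp
  define R where "R a = {f\<in>?\<Omega>. \<forall>i\<in>{..<n}. f i \<in> {a i<..}}" for a :: "nat \<Rightarrow> real"
  define Gen where "Gen = {{f\<in>?\<Omega>. \<forall>i\<in>j. f i \<in> A i} | A j. j \<in> {{..<n}} \<and> A \<in> Pi j (\<lambda>_. range greaterThan)}"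
  have Gen_R: "Gen = range R"
  proof
    show "Gen \<subseteq> range R"
    proof
      fix X assume "X \<in> Gen"
      then obtain A where A: "A \<in> Pi {..<n} (\<lambda>_. range greaterThan)" and X: "X = {f\<in>?\<Omega>. \<forall>i\<in>{..<n}. f i \<in> A i}"
        unfolding Gen_def by auto
      have "\<forall>i\<in>{..<n}. \<exists>a. A i = {a<..}" using A by auto
      then obtain a where a: "\<forall>i\<in>{..<n}. A i = {a i<..}" by metis
      have "X = R a" unfolding X R_def using a by auto
      then show "X \<in> range R" by simp
    qed
    show "range R \<subseteq> Gen"
    proof
      fix X assume "X \<in> range R"
      then obtain a where "X = R a" by auto
      then show "X \<in> Gen" unfolding Gen_def R_def
        by (intro CollectI exI[of _ "\<lambda>i. {a i<..}"] exI[of _ "{..<n}"]) auto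
    qed
  qed
  have setsLb: "sets ?Lb = sigma_sets ?\<Omega> Gen"
    unfolding Gen_def by (rule gen_sets) simp
  have R_sets: "R a \<in> sets ?Lb" for a
    unfolding setsLb Gen_R by (intro sigma_sets.Basic) simp
  have R_PiE: "R a = (\<Pi>\<^sub>E i\<in>{..<n}. {a i<..})" for a
    unfolding R_def by (auto simp: PiE_def)
  have surv_id: "bernstein_copula n m \<alpha> (\<lambda>i. exp (- max (a i) 0))
      = (\<Sum>\<nu>\<in>?G. bern_gamma n \<alpha> \<nu> * (\<Prod>i<n. T m (\<nu> i) (exp (- max (a i) 0))))" for a :: "nat \<Rightarrow> real"
    using gamma_T_identity[OF m copula, of "\<lambda>i. exp (- max (a i) 0)"] by (simp add: unit_cube_def)
  have PZ: "distr M ?Lb Zv = density ?Lb g"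
  proof (rule measure_eqI_generator_eq[of Gen ?\<Omega>])
    show "Int_stable Gen"
      unfolding Gen_R
    proof (rule Int_stableI)
      fix X Y assume "X \<in> range R" "Y \<in> range R"
      then obtain a b where "X = R a" "Y = R b" by auto
      then have "X \<inter> Y = R (\<lambda>i. max (a i) (b i))" unfolding R_def by auto
      then show "X \<inter> Y \<in> range R" by simp
    qed
    show "Gen \<subseteq> Pow ?\<Omega>" unfolding Gen_R R_def by auto
    show "sets (distr M ?Lb Zv) = sigma_sets ?\<Omega> Gen" using setsLb by simp
    show "sets (density ?Lb g) = sigma_sets ?\<Omega> Gen" using setsLb by simp
    show "range (\<lambda>k::nat. R (\<lambda>_. - real k)) \<subseteq> Gen" unfolding Gen_R by auto
    show "(\<Union>k. R (\<lambda>_. - real k)) = ?\<Omega>"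
    proof safe
      fix f assume f: "f \<in> ?\<Omega>"
      obtain k :: nat where k: "Max (insert 0 ((\<lambda>i. - f i) ` {..<n})) < real k"
        using reals_Archimedean2 by blast
      have "\<forall>i\<in>{..<n}. - real k < f i"
      proof
        fix i assume "i \<in> {..<n}"
        then have "- f i \<le> Max (insert 0 ((\<lambda>i. - f i) ` {..<n}))" by (intro Max_ge) auto
        then have "- f i < real k" using k by linarith
        then show "- real k < f i" by linarith
      qed
      then show "f \<in> (\<Union>k. R (\<lambda>_. - real k))" using f unfolding R_def by (auto intro!: exI[of _ k])
    qed (auto simp: R_def)
    fix k :: nat
    have "prob_space (distr M ?Lb Zv)" by (intro prob_space_distr Zvm)
    then show "emeasure (distr M ?Lb Zv) (R (\<lambda>_. - real k)) \<noteq> \<infinity>"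
      by (simp add: prob_space.emeasure_le_1 prob_space_def finite_measure.emeasure_finite)
  next
    fix X assume "X \<in> Gen"
    then obtain a where X: "X = R a" unfolding Gen_R by auto
    have "emeasure (distr M ?Lb Zv) (R a) = emeasure M (Zv -` R a \<inter> space M)"
      by (rule emeasure_distr[OF Zvm R_sets])
    also have "Zv -` R a \<inter> space M = {\<omega> \<in> space M. \<forall>i<n. Z i \<omega> > a i}"
      unfolding R_def Zv_def by auto
    also have "emeasure M {\<omega> \<in> space M. \<forall>i<n. Z i \<omega> > a i} = emeasure M {\<omega> \<in> space M. \<forall>i<n. Z i \<omega> > max (a i) 0}"
    proof (rule emeasure_eq_AE)
      show "AE \<omega> in M. (\<omega> \<in> {\<omega> \<in> space M. \<forall>i<n. Z i \<omega> > a i}) = (\<omega> \<in> {\<omega> \<in> space M. \<forall>i<n. Z i \<omega> > max (a i) 0})"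
        using posZ by (auto elim!: eventually_mono)
      have cs: "{\<omega> \<in> space M. \<forall>i\<in>{..<n}. Z i \<omega> > c i} \<in> sets M" for c :: "nat \<Rightarrow> real"
      proof (intro sets.sets_Collect_finite_All)
        fix i assume "i \<in> {..<n}"
        then have [measurable]: "Z i \<in> borel_measurable M" using Zm by simp
        show "{\<omega> \<in> space M. c i < Z i \<omega>} \<in> sets M" by measurable
      qed simp
      have ceq: "{\<omega> \<in> space M. \<forall>i<n. Z i \<omega> > c i} = {\<omega> \<in> space M. \<forall>i\<in>{..<n}. Z i \<omega> > c i}" for c :: "nat \<Rightarrow> real"
        by auto
      show "{\<omega> \<in> space M. \<forall>i<n. Z i \<omega> > a i} \<in> sets M"
        unfolding ceq by (rule cs)
      show "{\<omega> \<in> space M. \<forall>i<n. Z i \<omega> > max (a i) 0} \<in> sets M"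
        unfolding ceq by (rule cs)
    qed
    also have "\<dots> = ennreal (measure M {\<omega> \<in> space M. \<forall>i<n. Z i \<omega> > max (a i) 0})"
      by (rule emeasure_eq_measure)
    also have "\<dots> = ennreal (bernstein_copula n m \<alpha> (\<lambda>i. exp (- max (a i) 0)))"
      using Z_surv[of "\<lambda>i. max (a i) 0"] by simp
    finally have left: "emeasure (distr M ?Lb Zv) (R a) = ennreal (bernstein_copula n m \<alpha> (\<lambda>i. exp (- max (a i) 0)))" .
    have "emeasure (density ?Lb g) (R a) = (\<integral>\<^sup>+z. g z * indicator (R a) z \<partial>?Lb)"
      by (rule emeasure_density[OF gm R_sets])
    also have "\<dots> = (\<integral>\<^sup>+z. (\<Sum>\<nu>\<in>?G. ennreal (bern_gamma n \<alpha> \<nu>) *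
        (\<Prod>i<n. ennreal (fden m (\<nu> i) (z i)) * indicator {a i<..} (z i))) \<partial>?Lb)"
    proof (intro nn_integral_cong)
      fix z assume "z \<in> space ?Lb"
      then have z: "z \<in> ?\<Omega>" by (simp add: space_PiM)
      show "g z * indicator (R a) z = (\<Sum>\<nu>\<in>?G. ennreal (bern_gamma n \<alpha> \<nu>) *
        (\<Prod>i<n. ennreal (fden m (\<nu> i) (z i)) * indicator {a i<..} (z i)))"
        unfolding g_def R_PiE indicator_PiE_prod[OF _ z, simplified] sum_distrib_right prod.distrib
        by (simp add: mult.assoc)
    qed
    also have "\<dots> = (\<Sum>\<nu>\<in>?G. ennreal (bern_gamma n \<alpha> \<nu>) *
        (\<integral>\<^sup>+z. (\<Prod>i<n. ennreal (fden m (\<nu> i) (z i)) * indicator {a i<..} (z i)) \<partial>?Lb))"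
      by (subst nn_integral_sum) (auto intro!: sum.cong nn_integral_cmult)
    also have "\<dots> = (\<Sum>\<nu>\<in>?G. ennreal (bern_gamma n \<alpha> \<nu>) *
        (\<Prod>i<n. ennreal (T m (\<nu> i) (exp (- max (a i) 0)))))"
    proof (intro sum.cong refl arg_cong[where f="\<lambda>x. _ * x"])
      fix \<nu> assume \<nu>: "\<nu> \<in> ?G"
      have "(\<integral>\<^sup>+z. (\<Prod>i<n. ennreal (fden m (\<nu> i) (z i)) * indicator {a i<..} (z i)) \<partial>?Lb)
          = (\<Prod>i<n. \<integral>\<^sup>+x. ennreal (fden m (\<nu> i) x) * indicator {a i<..} x \<partial>lborel)"
        by (rule L.product_nn_integral_prod) auto
      also have "\<dots> = (\<Prod>i<n. ennreal (T m (\<nu> i) (exp (- max (a i) 0))))"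
      proof (intro prod.cong refl)
        fix i assume "i \<in> {..<n}"
        then have "\<nu> i < m" using \<nu>m[OF \<nu>] by simp
        then show "(\<integral>\<^sup>+x. ennreal (fden m (\<nu> i) x) * indicator {a i<..} x \<partial>lborel) = ennreal (T m (\<nu> i) (exp (- max (a i) 0)))"
          using surv_T[of "\<nu> i" m "a i"] by (simp add: emeasure_density)
      qed
      finally show "(\<integral>\<^sup>+z. (\<Prod>i<n. ennreal (fden m (\<nu> i) (z i)) * indicator {a i<..} (z i)) \<partial>?Lb)
          = (\<Prod>i<n. ennreal (T m (\<nu> i) (exp (- max (a i) 0))))" .
    qed
    also have "\<dots> = ennreal (\<Sum>\<nu>\<in>?G. bern_gamma n \<alpha> \<nu> * (\<Prod>i<n. T m (\<nu> i) (exp (- max (a i) 0))))"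
    proof -
      have Tn: "0 \<le> T m k (exp (- max c 0))" for k c
        by (intro T_nonneg) auto
      have "(\<Sum>\<nu>\<in>?G. ennreal (bern_gamma n \<alpha> \<nu>) * (\<Prod>i<n. ennreal (T m (\<nu> i) (exp (- max (a i) 0)))))
          = (\<Sum>\<nu>\<in>?G. ennreal (bern_gamma n \<alpha> \<nu> * (\<Prod>i<n. T m (\<nu> i) (exp (- max (a i) 0)))))"
        using \<gamma>nn Tn by (intro sum.cong refl) (simp add: prod_ennreal ennreal_mult prod_nonneg)
      also have "\<dots> = ennreal (\<Sum>\<nu>\<in>?G. bern_gamma n \<alpha> \<nu> * (\<Prod>i<n. T m (\<nu> i) (exp (- max (a i) 0))))"
        using \<gamma>nn Tn by (intro sum_ennreal) (simp add: prod_nonneg)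
      finally show ?thesis .
    qed
    finally have right: "emeasure (density ?Lb g) (R a) = ennreal (bernstein_copula n m \<alpha> (\<lambda>i. exp (- max (a i) 0)))"
      using surv_id[of a] by simp
    show "emeasure (distr M ?Lb Zv) X = emeasure (density ?Lb g) X"
      unfolding X left right ..
  qed
  let ?S = "\<lambda>z::nat \<Rightarrow> real. \<Sum>i<n. z i"
  have Sm[measurable]: "?S \<in> borel_measurable ?Lb" by measurable
  have SB: "distr (density ?Lb g) lborel ?S
      = density lborel (\<lambda>x. \<Sum>\<nu>\<in>?G. ennreal (bern_gamma n \<alpha> \<nu>) * mixd (real m) (?Kn \<nu>) x)"
  proof (rule measure_eqI)
    show "sets (distr (density ?Lb g) lborel ?S) = sets (density lborel (\<lambda>x. \<Sum>\<nu>\<in>?G. ennreal (bern_gamma n \<alpha> \<nu>) * mixd (real m) (?Kn \<nu>) x))"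
      by simp
    fix A assume "A \<in> sets (distr (density ?Lb g) lborel ?S)"
    then have A[measurable]: "A \<in> sets borel" by simp
    define B where "B = ?S -` A \<inter> space ?Lb"
    have Bs: "B \<in> sets ?Lb" unfolding B_def by (rule measurable_sets[OF Sm]) simp
    have "emeasure (distr (density ?Lb g) lborel ?S) A = emeasure (density ?Lb g) B"
      unfolding B_def by (subst emeasure_distr) simp_all
    also have "\<dots> = (\<integral>\<^sup>+z. g z * indicator B z \<partial>?Lb)"
      by (rule emeasure_density[OF gm Bs])
    also have "\<dots> = (\<integral>\<^sup>+z. (\<Sum>\<nu>\<in>?G. ennreal (bern_gamma n \<alpha> \<nu>) * ((\<Prod>i<n. ennreal (fden m (\<nu> i) (z i))) * indicator B z)) \<partial>?Lb)"
      unfolding g_def sum_distrib_right by (simp add: mult.assoc)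
    also have "\<dots> = (\<Sum>\<nu>\<in>?G. ennreal (bern_gamma n \<alpha> \<nu>) * (\<integral>\<^sup>+z. (\<Prod>i<n. ennreal (fden m (\<nu> i) (z i))) * indicator B z \<partial>?Lb))"
      using Bs by (subst nn_integral_sum) (auto intro!: sum.cong nn_integral_cmult)
    also have "\<dots> = (\<Sum>\<nu>\<in>?G. ennreal (bern_gamma n \<alpha> \<nu>) * emeasure (density lborel (mixd (real m) (?Kn \<nu>))) A)"
    proof (intro sum.cong refl arg_cong[where f="\<lambda>x. _ * x"])
      fix \<nu> assume \<nu>: "\<nu> \<in> ?G"
      define f where "f i = fden m (if i < n then \<nu> i else 0)" for i
      have fprob: "prob_space (density lborel (f i))" for i
        unfolding f_def using \<nu>m[OF \<nu>] m by (intro prob_fden) auto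
      have "(\<integral>\<^sup>+z. (\<Prod>i<n. ennreal (fden m (\<nu> i) (z i))) * indicator B z \<partial>?Lb)
          = emeasure (density ?Lb (\<lambda>z. \<Prod>i\<in>{..<n}. ennreal (f i (z i)))) B"
        using Bs by (subst emeasure_density) (auto simp: f_def intro!: nn_integral_cong)
      also have "density ?Lb (\<lambda>z. \<Prod>i\<in>{..<n}. ennreal (f i (z i))) = PiM {..<n} (\<lambda>i. density lborel (f i))"
        by (rule PiM_density_prod[OF _ _ fprob]) (auto simp: f_def)
      also have "\<dots> = PiM {..<n} (\<lambda>i. density lborel (fden m (\<nu> i)))"
        by (rule PiM_cong) (auto simp: f_def)
      also have "emeasure (PiM {..<n} (\<lambda>i. density lborel (fden m (\<nu> i)))) B
          = emeasure (distr (PiM {..<n} (\<lambda>i. density lborel (fden m (\<nu> i)))) lborel ?S) A"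
      proof -
        have sp: "space (PiM {..<n} (\<lambda>i. density lborel (fden m (\<nu> i)))) = space ?Lb"
          by (simp add: space_PiM)
        have "?S \<in> measurable (PiM {..<n} (\<lambda>i. density lborel (fden m (\<nu> i)))) lborel"
          by measurable
        then show ?thesis unfolding B_def using sp by (subst emeasure_distr) auto
      qed
      also have "\<dots> = emeasure (density lborel (mixd (real m) (?Kn \<nu>))) A"
        using sum_law_nu[of n m \<nu>] n m \<nu> by simp
      finally show "(\<integral>\<^sup>+z. (\<Prod>i<n. ennreal (fden m (\<nu> i) (z i))) * indicator B z \<partial>?Lb)
          = emeasure (density lborel (mixd (real m) (?Kn \<nu>))) A" .
    qed
    also have "\<dots> = (\<Sum>\<nu>\<in>?G. ennreal (bern_gamma n \<alpha> \<nu>) * (\<integral>\<^sup>+x. mixd (real m) (?Kn \<nu>) x * indicator A x \<partial>lborel))"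
      by (intro sum.cong refl) (simp add: emeasure_density)
    also have "\<dots> = (\<integral>\<^sup>+x. (\<Sum>\<nu>\<in>?G. ennreal (bern_gamma n \<alpha> \<nu>) * mixd (real m) (?Kn \<nu>) x) * indicator A x \<partial>lborel)"
      unfolding sum_distrib_right
      by (subst nn_integral_sum) (auto intro!: sum.cong nn_integral_cmult[symmetric] simp: mult.assoc)
    also have "\<dots> = emeasure (density lborel (\<lambda>x. \<Sum>\<nu>\<in>?G. ennreal (bern_gamma n \<alpha> \<nu>) * mixd (real m) (?Kn \<nu>) x)) A"
      by (rule emeasure_density[symmetric]) auto
    finally show "emeasure (distr (density ?Lb g) lborel ?S) A = emeasure (density lborel (\<lambda>x. \<Sum>\<nu>\<in>?G. ennreal (bern_gamma n \<alpha> \<nu>) * mixd (real m) (?Kn \<nu>) x)) A" .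
  qed
  have SC: "(\<lambda>x. \<Sum>\<nu>\<in>?G. ennreal (bern_gamma n \<alpha> \<nu>) * mixd (real m) (?Kn \<nu>) x) = mixd (real m) ?K"
  proof
    fix x
    have "mixd (real m) ?K x = (\<integral>\<^sup>+\<nu>. mixd (real m) (?Kn \<nu>) x \<partial>measure_pmf Npmf)"
      unfolding mixd_def K_pmf_bind nn_integral_bind_pmf ..
    also have "\<dots> = (\<Sum>\<nu>\<in>?G. mixd (real m) (?Kn \<nu>) x * pmf Npmf \<nu>)"
      using set_N[OF N_law] by (intro nn_integral_measure_pmf_support finG) auto
    also have "\<dots> = (\<Sum>\<nu>\<in>?G. ennreal (bern_gamma n \<alpha> \<nu>) * mixd (real m) (?Kn \<nu>) x)"
      using N_law by (intro sum.cong refl) (simp add: mult.commute)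
    finally show "(\<Sum>\<nu>\<in>?G. ennreal (bern_gamma n \<alpha> \<nu>) * mixd (real m) (?Kn \<nu>) x) = mixd (real m) ?K x" by simp
  qed
  define tg where "tg x = (if 0 < x then
                   (\<Sum>k. pmf (K_pmf n m Npmf) (k + n) * exp (- real m * x) * x ^ (k + n - 1)
                          * real m ^ (k + n) / Gamma (real (k + n)))
                 else 0)" for x :: real
  have TG: "mixd (real m) ?K = (\<lambda>x. ennreal (tg x))"
    unfolding tg_def using mixd_target[OF n m, of ?K] c2 by (simp add: fun_eq_iff)
  have dS: "distr M lborel (\<lambda>\<omega>. \<Sum>i<n. Z i \<omega>) = density lborel (\<lambda>x. ennreal (tg x))"
  proof -
    have "distr M lborel (\<lambda>\<omega>. \<Sum>i<n. Z i \<omega>) = distr M lborel (?S \<circ> Zv)"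
      by (rule distr_cong) (auto simp: Zv_def)
    also have "\<dots> = distr (distr M ?Lb Zv) lborel ?S"
      by (rule distr_distr[symmetric]) (simp_all add: Zvm)
    also have "\<dots> = density lborel (\<lambda>x. ennreal (tg x))"
      unfolding PZ SB SC TG ..
    finally show ?thesis .
  qed
  have tgm: "(\<lambda>x. ennreal (tg x)) \<in> borel_measurable lborel"
    unfolding TG[symmetric] by simp
  have Sm2: "(\<lambda>\<omega>. \<Sum>i<n. Z i \<omega>) \<in> measurable M lborel"
    using Zm by (simp add: borel_measurable_sum)
  have "distributed M lborel (\<lambda>\<omega>. \<Sum>i<n. Z i \<omega>) (\<lambda>x. ennreal (tg x))"
    unfolding distributed_def using dS tgm Sm2 by simp
  then have c1: "distributed M lborel (\<lambda>\<omega>. \<Sum>i<n. Z i \<omega>) (\<lambda>x. ennreal (tg x))" .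
  show ?thesis unfolding tg_def[symmetric] by (intro conjI c1 c2 c3)
qed


end
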